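(* Fix $c>0$ and $0\le\alpha\le 1$, and for each $n$ put $t=\lfloor cn^{\alpha}\rfloor$; assume $1\le t\le \frac{n+1}{2}$ (for all large $n$). For each such $n$, let $\sigma$ be any sign assignment on the arcs of $K_{n+1}$ (as in the context) whose set $M$ of marked edges is a $t$-matching. Let $u\in\mathbb{C}^{\mathcal{A}}$ be the uniform state $u(a)=1/\sqrt{n(n+1)}$ for all $a\in\mathcal{A}$, and let $\psi_k=U_\sigma^k u$. Let $$\lambda_m=\frac{n-3+\sqrt{(n+3)^2-16t}}{2n}$$ (the largest eigenvalue of $T_\sigma$), $\theta_m=\arccos\lambda_m$, and $k_f=\lfloor \pi/(2\theta_m)\rfloor$. Then, as $n\to\infty$, $k_f=\Theta\big(n^{\frac{2-\alpha}{2}}\big)$, and the probability of finding the walker on a marked edge at time $k_f$, $$\sum_{e=xy\in M}\Big(|\psi_{k_f}((x,y))|^2+|\psi_{k_f}((y,x))|^2\Big),$$ equals $1-o(1)$. In particular, the quantum walk driven by $U_\sigma$ finds a marked edge with time complexity $O\big(n^{\frac{2-\alpha}{2}}\big)$.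
   Context: Setting. $K_{n+1}$ is the complete graph on the vertex set $V$ with $|V|=n+1$ ($n\ge 2$), edge set $E$; every vertex has degree $n$. The arc set is $\mathcal{A}=\{(x,y): x,y\in V, x\ne y\}$; for an arc $a=(x,y)$, $o(a)=x$ is its origin, $t(a)=y$ its terminus, and $a^{-1}=(y,x)$. A map $\sigma:\mathcal{A}\to\{\pm1\}$ is required to satisfy: $\sigma(a)=-1$ implies $\sigma(a^{-1})=1$. Put $\mathcal{M}=\{a\in\mathcal{A}:\sigma(a)=-1\}$, $\mathcal{M}^{-1}=\{a^{-1}:a\in\mathcal{M}\}$, $\tau(xy)=\sigma((x,y))\sigma((y,x))$ for $xy\in E$, and $M=\{e\in E:\tau(e)=-1\}$ (the marked edges); $\partial M$ is the set of endpoints of edges in $M$. A $t$-matching is a set of $t$ pairwise vertex-disjoint edges. Define $w(a)=-1/\sqrt{n}$ if $a\in\mathcal{M}$ and $w(a)=1/\sqrt{n}$ otherwise; $d_\sigma:\mathbb{C}^{\mathcal{A}}\to\mathbb{C}^V$ has entries $(d_\sigma)_{v,a}=w(a)$ if $t(a)=v$ and $0$ otherwise; $S$ on $\mathbb{C}^{\mathcal{A}}$ is the arc-reversal permutation, $S_{a,b}=1$ if $a=b^{-1}$ and $0$ otherwise. The time evolution operator is the unitary $U_\sigma=S(2d_\sigma^*d_\sigma-I_{\mathcal{A}})$, and $T_\sigma=d_\sigma S d_\sigma^*$ (a matrix on $\mathbb{C}^V$). *)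

theory Defs
  imports Complex_Main "HOL-Library.Landau_Symbols"
begin

definition arcs :: "nat \<Rightarrow> (nat \<times> nat) set" where
  "arcs n = {(x, y). x \<le> n \<and> y \<le> n \<and> x \<noteq> y}"

definition rev_arc :: "nat \<times> nat \<Rightarrow> nat \<times> nat" where
  "rev_arc a = (snd a, fst a)"

definition sign_assignment :: "nat \<Rightarrow> (nat \<times> nat \<Rightarrow> int) \<Rightarrow> bool" where
  "sign_assignment n \<sigma> \<longleftrightarrow>
     (\<forall>a\<in>arcs n. (\<sigma> a = -1 \<or> \<sigma> a = 1) \<and> (\<sigma> a = -1 \<longrightarrow> \<sigma> (rev_arc a) = 1))"

definition marked_edges :: "nat \<Rightarrow> (nat \<times> nat \<Rightarrow> int) \<Rightarrow> nat set set" where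
  "marked_edges n \<sigma> = {{x, y} | x y. (x, y) \<in> arcs n \<and> \<sigma> (x, y) * \<sigma> (y, x) = -1}"

definition is_matching :: "nat \<Rightarrow> nat set set \<Rightarrow> bool" where
  "is_matching t M \<longleftrightarrow> finite M \<and> card M = t \<and>
     (\<forall>e\<in>M. \<forall>e'\<in>M. e \<noteq> e' \<longrightarrow> e \<inter> e' = {})"

definition wt :: "nat \<Rightarrow> (nat \<times> nat \<Rightarrow> int) \<Rightarrow> nat \<times> nat \<Rightarrow> real" where
  "wt n \<sigma> a = (if \<sigma> a = -1 then -1 else 1) / sqrt (real n)"

definition d_op :: "nat \<Rightarrow> (nat \<times> nat \<Rightarrow> int) \<Rightarrow> (nat \<times> nat \<Rightarrow> complex) \<Rightarrow> nat \<Rightarrow> complex" where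
  "d_op n \<sigma> \<psi> v = (\<Sum>a\<in>{a\<in>arcs n. snd a = v}. complex_of_real (wt n \<sigma> a) * \<psi> a)"

definition d_adj :: "nat \<Rightarrow> (nat \<times> nat \<Rightarrow> int) \<Rightarrow> (nat \<Rightarrow> complex) \<Rightarrow> nat \<times> nat \<Rightarrow> complex" where
  "d_adj n \<sigma> f a = (if a \<in> arcs n then complex_of_real (wt n \<sigma> a) * f (snd a) else 0)"

definition S_op :: "nat \<Rightarrow> (nat \<times> nat \<Rightarrow> complex) \<Rightarrow> nat \<times> nat \<Rightarrow> complex" where
  "S_op n \<psi> a = (if a \<in> arcs n then \<psi> (rev_arc a) else 0)"

definition U_op :: "nat \<Rightarrow> (nat \<times> nat \<Rightarrow> int) \<Rightarrow> (nat \<times> nat \<Rightarrow> complex) \<Rightarrow> nat \<times> nat \<Rightarrow> complex" where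
  "U_op n \<sigma> \<psi> = S_op n (\<lambda>a. 2 * d_adj n \<sigma> (d_op n \<sigma> \<psi>) a - \<psi> a)"

definition unif :: "nat \<Rightarrow> nat \<times> nat \<Rightarrow> complex" where
  "unif n a = (if a \<in> arcs n then complex_of_real (1 / sqrt (real n * (real n + 1))) else 0)"

definition psi :: "nat \<Rightarrow> (nat \<times> nat \<Rightarrow> int) \<Rightarrow> nat \<Rightarrow> nat \<times> nat \<Rightarrow> complex" where
  "psi n \<sigma> k = (U_op n \<sigma> ^^ k) (unif n)"

text \<open>Probability of finding the walker on a marked edge:
  sum over e = xy in M of |psi((x,y))|^2 + |psi((y,x))|^2 = sum over arcs whose edge is marked.\<close>
definition success_prob :: "nat \<Rightarrow> (nat \<times> nat \<Rightarrow> int) \<Rightarrow> nat \<Rightarrow> real" where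
  "success_prob n \<sigma> k =
     (\<Sum>a\<in>{a\<in>arcs n. {fst a, snd a} \<in> marked_edges n \<sigma>}. (cmod (psi n \<sigma> k a))\<^sup>2)"

definition t_of :: "real \<Rightarrow> real \<Rightarrow> nat \<Rightarrow> nat" where
  "t_of c \<alpha> n = nat \<lfloor>c * real n powr \<alpha>\<rfloor>"

definition lambda_m :: "nat \<Rightarrow> nat \<Rightarrow> real" where
  "lambda_m n t = (real n - 3 + sqrt ((real n + 3)\<^sup>2 - 16 * real t)) / (2 * real n)"

definition k_f :: "nat \<Rightarrow> nat \<Rightarrow> nat" where
  "k_f n t = nat \<lfloor>pi / (2 * arccos (lambda_m n t))\<rfloor>"

end

theory Submission
  imports Defs "HOL-Real_Asymp.Real_Asymp"
begin


definition Lf :: "nat \<Rightarrow> (nat \<times> nat \<Rightarrow> int) \<Rightarrow> (nat \<Rightarrow> complex) \<Rightarrow> (nat \<Rightarrow> complex) \<Rightarrow> nat \<times> nat \<Rightarrow> complex" where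
  "Lf n \<sigma> P Q a = (if a \<in> arcs n then of_real (wt n \<sigma> a) * P (snd a) + of_real (wt n \<sigma> (rev_arc a)) * Q (fst a) else 0)"

definition Tm :: "nat \<Rightarrow> (nat \<times> nat \<Rightarrow> int) \<Rightarrow> (nat \<Rightarrow> complex) \<Rightarrow> nat \<Rightarrow> complex" where
  "Tm n \<sigma> Q v = (\<Sum>x\<in>{..n} - {v}. of_real (wt n \<sigma> (x, v) * wt n \<sigma> (v, x)) * Q x)"

lemma wt_sq: "n > 0 \<Longrightarrow> wt n \<sigma> a * wt n \<sigma> a = 1 / real n"
  by (simp add: wt_def)

lemma rev_arc_arcs: "a \<in> arcs n \<Longrightarrow> rev_arc a \<in> arcs n"
  by (auto simp: arcs_def rev_arc_def)

lemma rev_rev[simp]: "rev_arc (rev_arc a) = a"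
  by (simp add: rev_arc_def)

lemma arcs_into: "v \<le> n \<Longrightarrow> {a \<in> arcs n. snd a = v} = (\<lambda>x. (x, v)) ` ({..n} - {v})"
  by (auto simp: arcs_def)

lemma sum_arcs_into:
  assumes "v \<le> n"
  shows "(\<Sum>a\<in>{a \<in> arcs n. snd a = v}. g a) = (\<Sum>x\<in>{..n} - {v}. g (x, v))"
  unfolding arcs_into[OF assms] by (subst sum.reindex) (auto simp: inj_on_def)

lemma card_minus_v: "v \<le> n \<Longrightarrow> card ({..n} - {v}) = n"
  by simp

lemma d_op_Lf:
  assumes "n > 0" "v \<le> n"
  shows "d_op n \<sigma> (Lf n \<sigma> P Q) v = P v + Tm n \<sigma> Q v"
proof -
  have "d_op n \<sigma> (Lf n \<sigma> P Q) v = (\<Sum>x\<in>{..n} - {v}. of_real (wt n \<sigma> (x,v)) * Lf n \<sigma> P Q (x,v))"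
    unfolding d_op_def by (rule sum_arcs_into[OF assms(2)])
  also have "\<dots> = (\<Sum>x\<in>{..n} - {v}. of_real (1 / real n) * P v + of_real (wt n \<sigma> (x, v) * wt n \<sigma> (v, x)) * Q x)"
  proof (rule sum.cong[OF refl])
    fix x assume x: "x \<in> {..n} - {v}"
    hence "(x, v) \<in> arcs n" using assms by (auto simp: arcs_def)
    thus "of_real (wt n \<sigma> (x,v)) * Lf n \<sigma> P Q (x,v) = of_real (1 / real n) * P v + of_real (wt n \<sigma> (x, v) * wt n \<sigma> (v, x)) * Q x"
      using wt_sq[OF assms(1), of \<sigma> "(x,v)"]
      by (simp add: Lf_def rev_arc_def algebra_simps flip: of_real_mult)
  qed
  also have "\<dots> = P v + Tm n \<sigma> Q v"
    using assms by (simp add: sum.distrib Tm_def)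
  finally show ?thesis .
qed

lemma U_Lf:
  assumes "n > 0"
  shows "U_op n \<sigma> (Lf n \<sigma> P Q) = Lf n \<sigma> (\<lambda>v. - Q v) (\<lambda>v. P v + 2 * Tm n \<sigma> Q v)"
proof
  fix a
  show "U_op n \<sigma> (Lf n \<sigma> P Q) a = Lf n \<sigma> (\<lambda>v. - Q v) (\<lambda>v. P v + 2 * Tm n \<sigma> Q v) a"
  proof (cases "a \<in> arcs n")
    case True
    have r: "rev_arc a \<in> arcs n" using True by (rule rev_arc_arcs)
    have f: "fst a \<le> n" using True by (auto simp: arcs_def)
    show ?thesis
      using True r d_op_Lf[OF assms f, of \<sigma> P Q]
      by (simp add: U_op_def S_op_def d_adj_def Lf_def rev_arc_def algebra_simps)
  next
    case False
    thus ?thesis by (simp add: U_op_def S_op_def Lf_def)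
  qed
qed

lemma d_op_add: "d_op n \<sigma> (\<lambda>a. x a + y a) v = d_op n \<sigma> x v + d_op n \<sigma> y v"
  by (simp add: d_op_def sum.distrib algebra_simps)

lemma d_op_neg: "d_op n \<sigma> (\<lambda>a. - x a) v = - d_op n \<sigma> x v"
  by (simp add: d_op_def sum_negf)

lemma U_add: "U_op n \<sigma> (\<lambda>a. x a + y a) = (\<lambda>a. U_op n \<sigma> x a + U_op n \<sigma> y a)"
  by (rule ext) (simp add: U_op_def S_op_def d_adj_def d_op_add algebra_simps)

definition Inv :: "nat \<Rightarrow> (nat \<times> nat \<Rightarrow> int) \<Rightarrow> (nat \<times> nat \<Rightarrow> complex) \<Rightarrow> bool" where
  "Inv n \<sigma> r \<longleftrightarrow> (\<forall>a. a \<notin> arcs n \<longrightarrow> r a = 0) \<and> (\<forall>v\<le>n. d_op n \<sigma> r v = 0) \<and>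
     (\<forall>v\<le>n. d_op n \<sigma> (S_op n r) v = 0)"

lemma U_Inv:
  assumes "Inv n \<sigma> r"
  shows "U_op n \<sigma> r = (\<lambda>a. - S_op n r a)"
proof
  fix a
  have "\<And>b. d_adj n \<sigma> (d_op n \<sigma> r) b = 0"
    using assms by (auto simp: d_adj_def Inv_def arcs_def)
  thus "U_op n \<sigma> r a = - S_op n r a"
    by (simp add: U_op_def S_op_def)
qed

lemma SS: "(\<forall>a. a \<notin> arcs n \<longrightarrow> r a = 0) \<Longrightarrow> S_op n (S_op n r) = r"
  by (rule ext) (auto simp: S_op_def rev_arc_arcs)

lemma Inv_step:
  assumes "Inv n \<sigma> r"
  shows "Inv n \<sigma> (\<lambda>a. - S_op n r a)"
proof -
  have s: "S_op n (\<lambda>a. - S_op n r a) = (\<lambda>a. - r a)"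
    using SS[of n r] assms by (auto simp: Inv_def S_op_def fun_eq_iff rev_arc_arcs)
  have "\<forall>a. a \<notin> arcs n \<longrightarrow> - S_op n r a = 0" by (simp add: S_op_def)
  thus ?thesis using assms unfolding Inv_def s
    by (auto simp: d_op_neg)
qed

lemma Lf_cong:
  assumes "\<And>v. v \<le> n \<Longrightarrow> P v = P' v" "\<And>v. v \<le> n \<Longrightarrow> Q v = Q' v"
  shows "Lf n \<sigma> P Q = Lf n \<sigma> P' Q'"
  by (rule ext) (auto simp: Lf_def arcs_def assms)

lemma psi_form:
  assumes n: "n > 0" and r: "Inv n \<sigma> r"
    and Y: "\<And>k v. v \<le> n \<Longrightarrow> Y (Suc (Suc k)) v = 2 * Tm n \<sigma> (Y (Suc k)) v - Y k v"
    and u: "unif n = (\<lambda>a. Lf n \<sigma> (\<lambda>v. - Y 0 v) (Y 1) a + r a)"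
  shows "psi n \<sigma> k = (\<lambda>a. Lf n \<sigma> (\<lambda>v. - Y k v) (Y (Suc k)) a + ((\<lambda>x a. - S_op n x a)^^k) r a)
     \<and> Inv n \<sigma> (((\<lambda>x a. - S_op n x a)^^k) r)"
proof (induction k)
  case 0
  then show ?case using u r by (simp add: psi_def)
next
  case (Suc k)
  let ?R = "((\<lambda>x a. - S_op n x a)^^k) r"
  have IH: "psi n \<sigma> k = (\<lambda>a. Lf n \<sigma> (\<lambda>v. - Y k v) (Y (Suc k)) a + ?R a)" "Inv n \<sigma> ?R"
    using Suc by auto
  have "psi n \<sigma> (Suc k) = U_op n \<sigma> (psi n \<sigma> k)" by (simp add: psi_def)
  also have "\<dots> = (\<lambda>a. U_op n \<sigma> (Lf n \<sigma> (\<lambda>v. - Y k v) (Y (Suc k))) a + U_op n \<sigma> ?R a)"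
    unfolding IH(1) by (rule U_add)
  also have "U_op n \<sigma> (Lf n \<sigma> (\<lambda>v. - Y k v) (Y (Suc k))) = Lf n \<sigma> (\<lambda>v. - Y (Suc k) v) (Y (Suc (Suc k)))"
    unfolding U_Lf[OF n] by (rule Lf_cong) (auto simp: Y)
  also have "U_op n \<sigma> ?R = (\<lambda>a. - S_op n ?R a)" by (rule U_Inv[OF IH(2)])
  finally show ?case using Inv_step[OF IH(2)] by simp
qed


locale mset =
  fixes n :: nat and \<sigma> :: "nat \<times> nat \<Rightarrow> int" and t :: nat
  assumes sa: "sign_assignment n \<sigma>" and mt: "is_matching t (marked_edges n \<sigma>)" and npos: "n > 0"
begin

abbreviation "M \<equiv> marked_edges n \<sigma>"
definition "NA = {a \<in> arcs n. \<sigma> a = -1}"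
definition "Tset = fst ` NA"
definition "Hset = snd ` NA"

lemma sval: "a \<in> arcs n \<Longrightarrow> \<sigma> a = -1 \<or> \<sigma> a = 1"
  using sa by (auto simp: sign_assignment_def)

lemma snot2: "(x,y) \<in> arcs n \<Longrightarrow> \<sigma> (x,y) = -1 \<Longrightarrow> \<sigma> (y,x) = 1"
  using sa by (auto simp: sign_assignment_def rev_arc_def)

lemma arc_sym: "(x,y) \<in> arcs n \<Longrightarrow> (y,x) \<in> arcs n"
  by (auto simp: arcs_def)

lemma marked_iff:
  assumes "(x,y) \<in> arcs n"
  shows "{x,y} \<in> M \<longleftrightarrow> \<sigma> (x,y) = -1 \<or> \<sigma> (y,x) = -1"
proof
  assume "{x,y} \<in> M"
  then obtain x' y' where e: "{x,y} = {x',y'}" "(x',y') \<in> arcs n" "\<sigma> (x',y') * \<sigma> (y',x') = -1"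
    by (auto simp: marked_edges_def)
  have "\<sigma> (x',y') = -1 \<or> \<sigma> (y',x') = -1"
    using e(3) sval[OF e(2)] sval[OF arc_sym[OF e(2)]] by auto
  moreover have "(x = x' \<and> y = y') \<or> (x = y' \<and> y = x')" using e(1) by (auto simp: doubleton_eq_iff)
  ultimately show "\<sigma> (x,y) = -1 \<or> \<sigma> (y,x) = -1" by auto
next
  assume h: "\<sigma> (x,y) = -1 \<or> \<sigma> (y,x) = -1"
  have "\<sigma> (x,y) * \<sigma> (y,x) = -1"
    using h snot2[OF assms] snot2[OF arc_sym[OF assms]] by auto
  thus "{x,y} \<in> M" using assms by (auto simp: marked_edges_def)
qed

lemma M_disj: "e \<in> M \<Longrightarrow> e' \<in> M \<Longrightarrow> e \<noteq> e' \<Longrightarrow> e \<inter> e' = {}"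
  using mt by (auto simp: is_matching_def)

lemma NA_arcs: "a \<in> NA \<Longrightarrow> a \<in> arcs n" by (simp add: NA_def)

lemma NA_marked: "(x,y) \<in> NA \<Longrightarrow> {x,y} \<in> M"
  using marked_iff by (auto simp: NA_def)

lemma uniq:
  assumes "{x,y} \<in> M" "{x,z} \<in> M" "x \<noteq> y" "x \<noteq> z"
  shows "y = z"
proof (rule ccontr)
  assume "y \<noteq> z"
  hence "{x,y} \<noteq> {x,z}" by (auto simp: doubleton_eq_iff)
  thus False using M_disj[OF assms(1,2)] by auto
qed

lemma TH_disj: "Tset \<inter> Hset = {}"
proof (rule ccontr)
  assume "Tset \<inter> Hset \<noteq> {}"
  then obtain x y z where a: "(x,y) \<in> NA" "(z,x) \<in> NA" by (auto simp: Tset_def Hset_def)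
  have "{x,y} \<in> M" "{x,z} \<in> M" using NA_marked[OF a(1)] NA_marked[OF a(2)] by (auto simp: insert_commute)
  moreover have "x \<noteq> y" "x \<noteq> z" using a by (auto simp: NA_def arcs_def)
  ultimately have "y = z" by (rule uniq)
  thus False using a snot2 by (auto simp: NA_def)
qed

lemma T_fun: "(x,y) \<in> NA \<Longrightarrow> (x,y') \<in> NA \<Longrightarrow> y = y'"
  using uniq[of x y y'] NA_marked by (auto simp: NA_def arcs_def)

lemma H_fun: "(x,y) \<in> NA \<Longrightarrow> (x',y) \<in> NA \<Longrightarrow> x = x'"
  using uniq[of y x x'] NA_marked by (auto simp: NA_def arcs_def insert_commute)

lemma finite_NA: "finite NA"
proof -
  have "NA \<subseteq> {..n} \<times> {..n}" by (auto simp: NA_def arcs_def)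
  thus ?thesis by (rule finite_subset) auto
qed

lemma card_NA: "card NA = t"
proof -
  have "bij_betw (\<lambda>a. {fst a, snd a}) NA M"
  proof (rule bij_betwI')
    fix a b assume a: "a \<in> NA" "b \<in> NA"
    obtain x y x' y' where ab: "a = (x,y)" "b = (x',y')" by fastforce
    show "({fst a, snd a} = {fst b, snd b}) = (a = b)"
    proof
      assume "{fst a, snd a} = {fst b, snd b}"
      hence "(x = x' \<and> y = y') \<or> (x = y' \<and> y = x')" using ab by (auto simp: doubleton_eq_iff)
      thus "a = b" using a ab snot2 by (auto simp: NA_def)
    qed simp
  next
    fix a assume "a \<in> NA" thus "{fst a, snd a} \<in> M" using NA_marked by (cases a) auto
  next
    fix e assume "e \<in> M"
    then obtain x y where e: "e = {x,y}" "(x,y) \<in> arcs n" by (auto simp: marked_edges_def)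
    hence "\<sigma> (x,y) = -1 \<or> \<sigma> (y,x) = -1" using marked_iff \<open>e \<in> M\<close> by auto
    thus "\<exists>a\<in>NA. e = {fst a, snd a}"
    proof
      assume "\<sigma> (x,y) = -1" thus ?thesis using e by (auto simp: NA_def intro!: bexI[of _ "(x,y)"])
    next
      assume "\<sigma> (y,x) = -1" thus ?thesis using e arc_sym[OF e(2)]
        by (auto simp: NA_def insert_commute intro!: bexI[of _ "(y,x)"])
    qed
  qed
  hence "card NA = card M" by (rule bij_betw_same_card)
  thus ?thesis using mt by (simp add: is_matching_def)
qed

lemma card_T: "card Tset = t"
proof -
  have "inj_on fst NA" using T_fun by (auto simp: inj_on_def)
  thus ?thesis unfolding Tset_def using card_NA card_image by metis
qed

lemma card_H: "card Hset = t"
proof -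
  have "inj_on snd NA" using H_fun by (auto simp: inj_on_def)
  thus ?thesis unfolding Hset_def using card_NA card_image by metis
qed

lemma T_le: "Tset \<subseteq> {..n}" by (auto simp: Tset_def NA_def arcs_def)
lemma H_le: "Hset \<subseteq> {..n}" by (auto simp: Hset_def NA_def arcs_def)

lemma t_bound: "2 * t \<le> n + 1"
proof -
  have "card (Tset \<union> Hset) \<le> card {..n}" using T_le H_le by (intro card_mono) auto
  moreover have "card (Tset \<union> Hset) = 2 * t"
    using TH_disj card_T card_H finite_subset[OF T_le] finite_subset[OF H_le]
    by (simp add: card_Un_disjoint)
  ultimately show ?thesis by simp
qed

definition cf :: "complex \<Rightarrow> complex \<Rightarrow> complex \<Rightarrow> nat \<Rightarrow> complex" where
  "cf a b c v = (if v \<in> Tset then a else if v \<in> Hset then b else c)"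

lemma sum_cf: "(\<Sum>x\<in>{..n}. cf a b c x) = of_nat t * a + of_nat t * b + of_nat (n + 1 - 2*t) * c"
proof -
  let ?R = "{..n} - Tset - Hset"
  have fT: "finite Tset" "finite Hset" using finite_subset[OF T_le] finite_subset[OF H_le] by auto
  have split: "{..n} = Tset \<union> (Hset \<union> ?R)" using T_le H_le by auto
  have e0: "(\<Sum>x\<in>{..n}. cf a b c x) = (\<Sum>x\<in>Tset \<union> (Hset \<union> ?R). cf a b c x)"
    by (subst split, rule refl)
  have "(\<Sum>x\<in>{..n}. cf a b c x) = (\<Sum>x\<in>Tset. cf a b c x) + ((\<Sum>x\<in>Hset. cf a b c x) + (\<Sum>x\<in>?R. cf a b c x))"
  proof -
    have "(\<Sum>x\<in>Tset \<union> (Hset \<union> ?R). cf a b c x) = (\<Sum>x\<in>Tset. cf a b c x) + (\<Sum>x\<in>Hset \<union> ?R. cf a b c x)"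
      by (rule sum.union_disjoint) (use fT TH_disj in auto)
    moreover have "(\<Sum>x\<in>Hset \<union> ?R. cf a b c x) = (\<Sum>x\<in>Hset. cf a b c x) + (\<Sum>x\<in>?R. cf a b c x)"
      by (rule sum.union_disjoint) (use fT in auto)
    ultimately show ?thesis using e0 by simp
  qed
  also have "(\<Sum>x\<in>Tset. cf a b c x) = of_nat t * a" using card_T by (simp add: cf_def)
  also have "(\<Sum>x\<in>Hset. cf a b c x) = (\<Sum>x\<in>Hset. b)"
    using TH_disj by (intro sum.cong) (auto simp: cf_def)
  also have "\<dots> = of_nat t * b" using card_H by simp
  also have "(\<Sum>x\<in>?R. cf a b c x) = of_nat (card ?R) * c" by (simp add: cf_def)
  also have "card ?R = n + 1 - 2*t"
  proof -
    have e: "?R = {..n} - (Tset \<union> Hset)" by auto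
    have "card ?R = card {..n} - card (Tset \<union> Hset)" unfolding e
      by (rule card_Diff_subset) (use T_le H_le fT in auto)
    thus ?thesis using TH_disj card_T card_H fT by (simp add: card_Un_disjoint)
  qed
  finally show ?thesis by simp
qed

lemma wtwt:
  assumes "(x,v) \<in> arcs n"
  shows "wt n \<sigma> (x,v) * wt n \<sigma> (v,x) = (if {x,v} \<in> M then -1 else 1) / real n"
proof -
  have "sqrt (real n) * sqrt (real n) = real n" using npos by simp
  thus ?thesis
    using marked_iff[OF assms] snot2[OF assms] snot2[OF arc_sym[OF assms]]
    by (auto simp: wt_def)
qed

lemma Tm_gen:
  assumes "v \<le> n"
  shows "Tm n \<sigma> Q v = ((\<Sum>x\<in>{..n} - {v}. Q x) - 2 * (\<Sum>x\<in>{x\<in>{..n} - {v}. {x,v} \<in> M}. Q x)) / of_nat n"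
proof -
  have "Tm n \<sigma> Q v = (\<Sum>x\<in>{..n} - {v}. (if {x,v} \<in> M then -1 else 1) / of_nat n * Q x)"
    unfolding Tm_def
  proof (rule sum.cong[OF refl])
    fix x assume "x \<in> {..n} - {v}"
    hence "(x,v) \<in> arcs n" using assms by (auto simp: arcs_def)
    thus "of_real (wt n \<sigma> (x, v) * wt n \<sigma> (v, x)) * Q x = (if {x,v} \<in> M then -1 else 1) / of_nat n * Q x"
      by (simp add: wtwt)
  qed
  also have "\<dots> = (\<Sum>x\<in>{..n} - {v}. Q x / of_nat n - (if {x,v} \<in> M then 2 * Q x / of_nat n else 0))"
    by (intro sum.cong) (auto simp: field_simps)
  also have "\<dots> = (\<Sum>x\<in>{..n} - {v}. Q x) / of_nat n - 2 * (\<Sum>x\<in>{x\<in>{..n} - {v}. {x,v} \<in> M}. Q x) / of_nat n"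
    by (simp add: sum_subtractf sum_divide_distrib sum.inter_filter[symmetric] sum_distrib_left)
  finally show ?thesis by (simp add: diff_divide_distrib)
qed

lemma partners_T:
  assumes "(v,y) \<in> NA"
  shows "{x\<in>{..n} - {v}. {x,v} \<in> M} = {y}"
proof -
  have vy: "(v,y) \<in> arcs n" "{v,y} \<in> M" using assms NA_marked by (auto simp: NA_def)
  show ?thesis
  proof (intro equalityI subsetI)
    fix x assume "x \<in> {x\<in>{..n} - {v}. {x,v} \<in> M}"
    hence "{v,x} \<in> M" "v \<noteq> x" by (auto simp: insert_commute)
    thus "x \<in> {y}" using uniq[OF vy(2)] vy(1) by (auto simp: arcs_def)
  next
    fix x assume "x \<in> {y}"
    thus "x \<in> {x\<in>{..n} - {v}. {x,v} \<in> M}" using vy by (auto simp: arcs_def insert_commute)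
  qed
qed

lemma partners_H:
  assumes "(y,v) \<in> NA"
  shows "{x\<in>{..n} - {v}. {x,v} \<in> M} = {y}"
proof -
  have "{y,v} \<in> M" using NA_marked[OF assms] .
  hence vy: "(y,v) \<in> arcs n" "{v,y} \<in> M" using assms by (auto simp: NA_def insert_commute)
  show ?thesis
  proof (intro equalityI subsetI)
    fix x assume "x \<in> {x\<in>{..n} - {v}. {x,v} \<in> M}"
    hence "{v,x} \<in> M" "v \<noteq> x" by (auto simp: insert_commute)
    thus "x \<in> {y}" using uniq[OF vy(2)] vy(1) by (auto simp: arcs_def)
  next
    fix x assume "x \<in> {y}"
    thus "x \<in> {x\<in>{..n} - {v}. {x,v} \<in> M}" using vy by (auto simp: arcs_def insert_commute)
  qed
qed

lemma partners_F:
  assumes "v \<notin> Tset" "v \<notin> Hset" "v \<le> n"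
  shows "{x\<in>{..n} - {v}. {x,v} \<in> M} = {}"
proof -
  { fix x assume x: "x \<le> n" "x \<noteq> v" "{x,v} \<in> M"
    hence a: "(x,v) \<in> arcs n" using assms by (auto simp: arcs_def)
    hence "\<sigma> (x,v) = -1 \<or> \<sigma> (v,x) = -1" using marked_iff x by auto
    hence False using assms a arc_sym[OF a]
      by (auto simp: Tset_def Hset_def NA_def image_iff) }
  thus ?thesis by auto
qed

lemma sum_minus_v: "v \<le> n \<Longrightarrow> (\<Sum>x\<in>{..n} - {v}. Q x) = (\<Sum>x\<in>{..n}. Q x) - (Q v :: complex)"
proof -
  assume "v \<le> n"
  hence "sum Q {..n} = Q v + sum Q ({..n} - {v})" by (intro sum.remove) auto
  thus ?thesis by simp
qed

definition Sc :: "complex \<Rightarrow> complex \<Rightarrow> complex \<Rightarrow> complex" where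
  "Sc a b c = of_nat t * a + of_nat t * b + of_nat (n + 1 - 2*t) * c"

lemma Tm_cf:
  assumes "v \<le> n"
  shows "Tm n \<sigma> (cf a b c) v = cf ((Sc a b c - a - 2*b)/of_nat n) ((Sc a b c - b - 2*a)/of_nat n) ((Sc a b c - c)/of_nat n) v"
proof -
  have base: "(\<Sum>x\<in>{..n} - {v}. cf a b c x) = Sc a b c - cf a b c v"
    using sum_minus_v[OF assms] sum_cf by (simp add: Sc_def)
  show ?thesis
  proof (cases "v \<in> Tset")
    case True
    then obtain y where y: "(v,y) \<in> NA" by (auto simp: Tset_def)
    hence "y \<in> Hset" by (force simp: Hset_def)
    hence "cf a b c y = b" using TH_disj by (auto simp: cf_def)
    thus ?thesis using True base Tm_gen[OF assms, of "cf a b c", unfolded partners_T[OF y]]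
      by (simp add: cf_def)
  next
    case nT: False
    show ?thesis
    proof (cases "v \<in> Hset")
      case True
      then obtain y where y: "(y,v) \<in> NA" by (auto simp: Hset_def)
      hence "y \<in> Tset" by (force simp: Tset_def)
      hence "cf a b c y = a" by (auto simp: cf_def)
      thus ?thesis using True nT base Tm_gen[OF assms, of "cf a b c", unfolded partners_H[OF y]]
        by (simp add: cf_def)
    next
      case False
      thus ?thesis using nT base Tm_gen[OF assms, of "cf a b c", unfolded partners_F[OF nT False assms]]
        by (simp add: cf_def)
    qed
  qed
qed

lemma wt_NA: "a \<in> arcs n \<Longrightarrow> wt n \<sigma> a = (if a \<in> NA then -1 else 1) / sqrt (real n)"
  by (auto simp: wt_def NA_def)

lemma in_NA_into:
  assumes "v \<le> n"
  shows "card {x\<in>{..n} - {v}. (x,v) \<in> NA} = (if v \<in> Hset then 1 else 0)"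
proof (cases "v \<in> Hset")
  case True
  then obtain y where y: "(y,v) \<in> NA" by (auto simp: Hset_def)
  have "{x\<in>{..n} - {v}. (x,v) \<in> NA} = {y}"
    using y H_fun[OF y] by (auto simp: NA_def arcs_def)
  thus ?thesis using True by simp
next
  case False
  hence "{x\<in>{..n} - {v}. (x,v) \<in> NA} = {}" by (force simp: Hset_def)
  thus ?thesis using False by simp
qed

lemma d_op_unif:
  assumes "v \<le> n"
  shows "d_op n \<sigma> (unif n) v = of_real ((if v \<in> Hset then real n - 2 else real n) / sqrt (real n) / sqrt (real n * (real n + 1)))"
proof -
  let ?c = "1 / sqrt (real n * (real n + 1))"
  have "d_op n \<sigma> (unif n) v = (\<Sum>x\<in>{..n} - {v}. of_real (wt n \<sigma> (x,v)) * unif n (x,v))"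
    unfolding d_op_def by (rule sum_arcs_into[OF assms])
  also have "\<dots> = of_real (\<Sum>x\<in>{..n} - {v}. (1 / sqrt (real n) - (if (x,v) \<in> NA then 2 / sqrt (real n) else 0)) * ?c)"
    unfolding of_real_sum
  proof (rule sum.cong[OF refl])
    fix x assume "x \<in> {..n} - {v}"
    hence a: "(x,v) \<in> arcs n" using assms by (auto simp: arcs_def)
    show "of_real (wt n \<sigma> (x,v)) * unif n (x,v) = of_real ((1 / sqrt (real n) - (if (x,v) \<in> NA then 2 / sqrt (real n) else 0)) * ?c)"
      using a by (simp add: wt_NA unif_def flip: of_real_mult)
  qed
  also have "(\<Sum>x\<in>{..n} - {v}. (1 / sqrt (real n) - (if (x,v) \<in> NA then 2 / sqrt (real n) else 0)) * ?c)
     = (real n / sqrt (real n) - real (card {x\<in>{..n} - {v}. (x,v) \<in> NA}) * (2 / sqrt (real n))) * ?c"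
  proof -
    let ?S = "{..n} - {v}"
    have f1: "(\<Sum>x\<in>?S. (if (x,v) \<in> NA then 2 / sqrt (real n) else 0)) = (\<Sum>x\<in>{x\<in>?S. (x,v) \<in> NA}. 2 / sqrt (real n))"
      by (rule sum.inter_filter[symmetric]) simp
    have f2: "(\<Sum>x\<in>?S. (1 / sqrt (real n) - (if (x,v) \<in> NA then 2 / sqrt (real n) else 0)))
       = real n / sqrt (real n) - real (card {x\<in>?S. (x,v) \<in> NA}) * (2 / sqrt (real n))"
      unfolding sum_subtractf f1 using assms by simp
    show ?thesis unfolding sum_distrib_right[symmetric] f2 ..
  qed
  also have "\<dots> = (if v \<in> Hset then real n - 2 else real n) / sqrt (real n) / sqrt (real n * (real n + 1))"
    unfolding in_NA_into[OF assms] using npos by (simp add: diff_divide_distrib)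
  finally show ?thesis .
qed

lemma marked_arcs: "{a \<in> arcs n. {fst a, snd a} \<in> M} = NA \<union> rev_arc ` NA"
proof (intro equalityI subsetI)
  fix a assume "a \<in> {a \<in> arcs n. {fst a, snd a} \<in> M}"
  then obtain x y where a: "a = (x,y)" "(x,y) \<in> arcs n" "{x,y} \<in> M" by (cases a) auto
  hence "\<sigma> (x,y) = -1 \<or> \<sigma> (y,x) = -1" using marked_iff by auto
  thus "a \<in> NA \<union> rev_arc ` NA"
    using a arc_sym[OF a(2)] by (auto simp: NA_def image_iff rev_arc_def)
next
  fix a assume "a \<in> NA \<union> rev_arc ` NA"
  thus "a \<in> {a \<in> arcs n. {fst a, snd a} \<in> M}"
    using NA_marked arc_sym by (auto simp: NA_def rev_arc_arcs rev_arc_def insert_commute)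
qed

lemma NA_rev_disj: "NA \<inter> rev_arc ` NA = {}"
  using snot2 by (auto simp: NA_def rev_arc_def)

lemma success_split:
  assumes "\<And>a. a \<in> NA \<Longrightarrow> cmod (psi n \<sigma> k a) = X"
    and "\<And>a. a \<in> NA \<Longrightarrow> cmod (psi n \<sigma> k (rev_arc a)) = Y"
  shows "success_prob n \<sigma> k = real t * X\<^sup>2 + real t * Y\<^sup>2"
proof -
  have inj: "inj_on rev_arc NA" by (metis inj_on_def rev_rev)
  have "success_prob n \<sigma> k = (\<Sum>a\<in>NA. (cmod (psi n \<sigma> k a))\<^sup>2) + (\<Sum>a\<in>rev_arc ` NA. (cmod (psi n \<sigma> k a))\<^sup>2)"
    unfolding success_prob_def marked_arcs
    by (rule sum.union_disjoint) (use finite_NA NA_rev_disj in auto)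
  also have "(\<Sum>a\<in>rev_arc ` NA. (cmod (psi n \<sigma> k a))\<^sup>2) = (\<Sum>a\<in>NA. (cmod (psi n \<sigma> k (rev_arc a)))\<^sup>2)"
    by (rule sum.reindex[OF inj, unfolded comp_def])
  finally show ?thesis using assms card_NA by simp
qed

end


fun Ch :: "real \<Rightarrow> nat \<Rightarrow> real" where
  "Ch l 0 = -1"
| "Ch l (Suc 0) = 1"
| "Ch l (Suc (Suc k)) = 2 * l * Ch l (Suc k) - Ch l k"

definition "RR n t = sqrt ((real n + 3)\<^sup>2 - 16 * real t)"
definition "mu1 n t = (real n - 3 + RR n t) / 2"
definition "mu2 n t = (real n - 3 - RR n t) / 2"
definition "aa1 n t = mu1 n t - real n + 2 * real t"
definition "aa2 n t = mu2 n t - real n + 2 * real t"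
definition "lam1 n t = mu1 n t / real n"
definition "lam2 n t = mu2 n t / real n"
definition "lamA n = 1 / real n"
definition "c0 n = 1 / sqrt (real n * (real n + 1))"
definition "pp n = 1 / sqrt (real n)"
definition "hT n = real n * pp n * c0 n"
definition "yh n = (real n - 1) * pp n * c0 n"
definition "betaA n = pp n * c0 n"
definition "beta1 n t = (2 * real t * yh n - aa2 n t * hT n) / (2 * real t * RR n t)"
definition "beta2 n t = (aa1 n t * hT n - 2 * real t * yh n) / (2 * real t * RR n t)"
definition "alA n = betaA n / (1 + lamA n)"
definition "al1 n t = beta1 n t / (1 + lam1 n t)"
definition "al2 n t = beta2 n t / (1 + lam2 n t)"
definition "yT n t k = alA n * Ch (lamA n) k + al1 n t * aa1 n t * Ch (lam1 n t) k + al2 n t * aa2 n t * Ch (lam2 n t) k"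
definition "yH n t k = - alA n * Ch (lamA n) k + al1 n t * aa1 n t * Ch (lam1 n t) k + al2 n t * aa2 n t * Ch (lam2 n t) k"
definition "rho n = c0 n - 2 * pp n * alA n"

lemma RR_facts:
  assumes "2 * t \<le> n + 1"
  shows "(real n + 3)\<^sup>2 - 16 * real t \<ge> (real n - 1)\<^sup>2" "RR n t \<ge> \<bar>real n - 1\<bar>"
    "(RR n t)\<^sup>2 = (real n + 3)\<^sup>2 - 16 * real t" "RR n t \<le> real n + 3"
proof -
  have "2 * real t \<le> real n + 1" using assms by linarith
  thus a: "(real n + 3)\<^sup>2 - 16 * real t \<ge> (real n - 1)\<^sup>2" by (simp add: power2_eq_square algebra_simps)
  hence "sqrt ((real n - 1)\<^sup>2) \<le> RR n t" unfolding RR_def by (rule real_sqrt_le_mono)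
  thus "RR n t \<ge> \<bar>real n - 1\<bar>" by simp
  have "0 \<le> (real n - 1)\<^sup>2" by simp
  hence "0 \<le> (real n + 3)\<^sup>2 - 16 * real t" using a by linarith
  thus "(RR n t)\<^sup>2 = (real n + 3)\<^sup>2 - 16 * real t" unfolding RR_def by simp
  have "0 \<le> (real n - 1)\<^sup>2" by simp
  show "RR n t \<le> real n + 3" unfolding RR_def
    by (rule real_le_lsqrt) (use a \<open>0 \<le> (real n - 1)\<^sup>2\<close> in auto)
qed

lemma mu_quad:
  assumes "2 * t \<le> n + 1" and "mu = (real n - 3 + s * RR n t) / 2" and "s = 1 \<or> s = -1"
  shows "mu\<^sup>2 - (real n - 3) * mu + 4 * real t - 3 * real n = 0"
proof -
  have "s\<^sup>2 = 1" using assms(3) by auto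
  hence S: "(s * RR n t)\<^sup>2 = (real n + 3)\<^sup>2 - 16 * real t" using RR_facts(3)[OF assms(1)]
    by (simp add: power_mult_distrib)
  have "mu\<^sup>2 - (real n - 3) * mu + 4 * real t - 3 * real n = ((s * RR n t)\<^sup>2 - ((real n + 3)\<^sup>2 - 16 * real t)) / 4"
    unfolding assms(2) by (simp add: power2_eq_square field_simps)
  thus ?thesis using S by simp
qed

lemma mu1_quad: "2 * t \<le> n + 1 \<Longrightarrow> (mu1 n t)\<^sup>2 - (real n - 3) * mu1 n t + 4 * real t - 3 * real n = 0"
  by (rule mu_quad[where s=1]) (auto simp: mu1_def)
lemma mu2_quad: "2 * t \<le> n + 1 \<Longrightarrow> (mu2 n t)\<^sup>2 - (real n - 3) * mu2 n t + 4 * real t - 3 * real n = 0"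
  by (rule mu_quad[where s="-1"]) (auto simp: mu2_def)

lemma eig_real:
  assumes q: "mu\<^sup>2 - (real n - 3) * mu + 4 * real t - 3 * real n = 0" and a: "a = mu - real n + 2 * real t"
  shows "2 * real t * a + (real n + 1 - 2 * real t) * (2 * real t) - 3 * a = mu * a"
    "2 * real t * a + (real n + 1 - 2 * real t) * (2 * real t) - 2 * real t = mu * (2 * real t)"
  using q unfolding a by (simp_all add: power2_eq_square algebra_simps)

context mset
begin

lemma Tm_cf_real:
  assumes "v \<le> n"
  shows "Tm n \<sigma> (cf (of_real a) (of_real b) (of_real c)) v =
    cf (of_real ((real t * a + real t * b + real (n + 1 - 2*t) * c - a - 2*b) / real n))
       (of_real ((real t * a + real t * b + real (n + 1 - 2*t) * c - b - 2*a) / real n))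
       (of_real ((real t * a + real t * b + real (n + 1 - 2*t) * c - c) / real n)) v"
  unfolding Tm_cf[OF assms] by (simp add: Sc_def)

lemma Tm_lin: "Tm n \<sigma> (\<lambda>v. x * A v + y * B v + z * C v) w = x * Tm n \<sigma> A w + y * Tm n \<sigma> B w + z * Tm n \<sigma> C w"
  unfolding Tm_def by (simp add: sum.distrib sum_distrib_left algebra_simps)

definition "EA = cf 1 (-1) 0"
definition "E1 = cf (of_real (aa1 n t)) (of_real (aa1 n t)) (of_real (2 * real t))"
definition "E2 = cf (of_real (aa2 n t)) (of_real (aa2 n t)) (of_real (2 * real t))"

lemma realsub: "real (n + 1 - 2*t) = real n + 1 - 2 * real t"
  using t_bound by simp

lemma eig_EA: "v \<le> n \<Longrightarrow> Tm n \<sigma> EA v = of_real (lamA n) * EA v"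
proof -
  assume v: "v \<le> n"
  have "EA = cf (of_real 1) (of_real (-1)) (of_real 0)" by (simp add: EA_def)
  hence "Tm n \<sigma> EA v = cf (of_real (1 / real n)) (of_real (- 1 / real n)) (of_real 0) v"
    using Tm_cf_real[OF v, of 1 "-1" 0] by simp
  thus ?thesis by (simp add: cf_def EA_def lamA_def)
qed

lemma eig_E:
  assumes v: "v \<le> n" and q: "mu\<^sup>2 - (real n - 3) * mu + 4 * real t - 3 * real n = 0" and a: "a = mu - real n + 2 * real t"
  shows "Tm n \<sigma> (cf (of_real a) (of_real a) (of_real (2 * real t))) v = of_real (mu / real n) * cf (of_real a) (of_real a) (of_real (2 * real t)) v"
proof -
  note e = eig_real[OF q a]
  have e1: "(real t * a + real t * a + (real n + 1 - 2 * real t) * (2 * real t) - a - 2 * a) / real n = mu / real n * a"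
    using e(1) by (simp add: field_simps)
  have e3: "(real t * a + real t * a + (real n + 1 - 2 * real t) * (2 * real t) - 2 * real t) / real n = mu / real n * (2 * real t)"
    using e(2) by (simp add: field_simps)
  show ?thesis unfolding Tm_cf_real[OF v] realsub e1 e3 by (simp add: cf_def)
qed

lemma eig_E1: "v \<le> n \<Longrightarrow> Tm n \<sigma> E1 v = of_real (lam1 n t) * E1 v"
  unfolding E1_def lam1_def by (rule eig_E[OF _ mu1_quad[OF t_bound]]) (simp_all add: aa1_def)

lemma eig_E2: "v \<le> n \<Longrightarrow> Tm n \<sigma> E2 v = of_real (lam2 n t) * E2 v"
  unfolding E2_def lam2_def by (rule eig_E[OF _ mu2_quad[OF t_bound]]) (simp_all add: aa2_def)

definition "Yk k v = of_real (alA n * Ch (lamA n) k) * EA v + of_real (al1 n t * Ch (lam1 n t) k) * E1 v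
   + of_real (al2 n t * Ch (lam2 n t) k) * E2 v"

lemma Yk_rec: "v \<le> n \<Longrightarrow> Yk (Suc (Suc k)) v = 2 * Tm n \<sigma> (Yk (Suc k)) v - Yk k v"
proof -
  assume v: "v \<le> n"
  have "Tm n \<sigma> (Yk (Suc k)) v = of_real (alA n * Ch (lamA n) (Suc k)) * Tm n \<sigma> EA v
     + of_real (al1 n t * Ch (lam1 n t) (Suc k)) * Tm n \<sigma> E1 v + of_real (al2 n t * Ch (lam2 n t) (Suc k)) * Tm n \<sigma> E2 v"
    unfolding Yk_def by (rule Tm_lin)
  thus ?thesis unfolding eig_EA[OF v] eig_E1[OF v] eig_E2[OF v] Yk_def
    by (simp add: algebra_simps)
qed

lemma Yk01: "Yk 0 v = - Yk 1 v"
  by (simp add: Yk_def)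

end


locale mset2 = mset +
  assumes t1: "t \<ge> 1" and n4: "n \<ge> 4"
begin

lemma RR_pos: "RR n t \<ge> real n - 1" "RR n t > 0"
  using RR_facts(2)[OF t_bound] n4 by auto

lemma aa_diff: "aa1 n t - aa2 n t = RR n t"
  by (simp add: aa1_def aa2_def mu1_def mu2_def field_simps)

lemma lam_ne: "1 + lamA n \<noteq> 0" "1 + lam1 n t \<noteq> 0" "1 + lam2 n t \<noteq> 0"
proof -
  have "lamA n > 0" using n4 by (simp add: lamA_def)
  thus "1 + lamA n \<noteq> 0" by linarith
  have "mu1 n t > 0" using RR_pos n4 by (simp add: mu1_def)
  hence "lam1 n t > 0" using n4 unfolding lam1_def by simp
  thus "1 + lam1 n t \<noteq> 0" by linarith
  have "mu2 n t \<ge> -3" using RR_facts(4)[OF t_bound] by (simp add: mu2_def)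
  hence "mu2 n t / real n > -1" using n4 by (simp add: field_simps)
  thus "1 + lam2 n t \<noteq> 0" unfolding lam2_def by linarith
qed

lemma Yk1: "Yk 1 v = of_real (alA n) * EA v + of_real (al1 n t) * E1 v + of_real (al2 n t) * E2 v"
  by (simp add: Yk_def)

lemma f_plus_Tf:
  assumes v: "v \<le> n"
  shows "Yk 1 v + Tm n \<sigma> (Yk 1) v = of_real (betaA n) * EA v + of_real (beta1 n t) * E1 v + of_real (beta2 n t) * E2 v"
proof -
  have "Tm n \<sigma> (Yk 1) v = of_real (alA n) * Tm n \<sigma> EA v + of_real (al1 n t) * Tm n \<sigma> E1 v + of_real (al2 n t) * Tm n \<sigma> E2 v"
    unfolding Yk1 by (rule Tm_lin)
  also have "\<dots> = of_real (alA n * lamA n) * EA v + of_real (al1 n t * lam1 n t) * E1 v + of_real (al2 n t * lam2 n t) * E2 v"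
    unfolding eig_EA[OF v] eig_E1[OF v] eig_E2[OF v] by simp
  finally have "Yk 1 v + Tm n \<sigma> (Yk 1) v = of_real (alA n * (1 + lamA n)) * EA v + of_real (al1 n t * (1 + lam1 n t)) * E1 v
     + of_real (al2 n t * (1 + lam2 n t)) * E2 v"
    unfolding Yk1 by (simp add: algebra_simps)
  moreover have "alA n * (1 + lamA n) = betaA n" "al1 n t * (1 + lam1 n t) = beta1 n t" "al2 n t * (1 + lam2 n t) = beta2 n t"
    using lam_ne by (simp_all add: alA_def al1_def al2_def)
  ultimately show ?thesis by simp
qed

lemma beta_sums:
  "beta1 n t * aa1 n t + beta2 n t * aa2 n t = yh n"
  "2 * real t * beta1 n t + 2 * real t * beta2 n t = hT n"
proof -
  have R: "RR n t \<noteq> 0" using RR_pos by simp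
  have tt: "real t \<noteq> 0" using t1 by simp
  have "beta1 n t * aa1 n t + beta2 n t * aa2 n t = yh n * (aa1 n t - aa2 n t) / RR n t"
    unfolding beta1_def beta2_def using R tt by (simp add: field_simps)
  thus "beta1 n t * aa1 n t + beta2 n t * aa2 n t = yh n" using aa_diff R by simp
  have "2 * real t * beta1 n t + 2 * real t * beta2 n t = hT n * (aa1 n t - aa2 n t) / RR n t"
    unfolding beta1_def beta2_def using R tt by (simp add: field_simps)
  thus "2 * real t * beta1 n t + 2 * real t * beta2 n t = hT n" using aa_diff R by simp
qed

lemma h_val:
  assumes v: "v \<le> n"
  shows "of_real (betaA n) * EA v + of_real (beta1 n t) * E1 v + of_real (beta2 n t) * E2 v = d_op n \<sigma> (unif n) v"
proof -
  have pc: "pp n * c0 n = 1 / sqrt (real n) / sqrt (real n * (real n + 1))" by (simp add: pp_def c0_def)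
  have A: "betaA n + yh n = real n * (pp n * c0 n)" by (simp add: betaA_def yh_def algebra_simps)
  have B: "- betaA n + yh n = (real n - 2) * (pp n * c0 n)" by (simp add: betaA_def yh_def algebra_simps)
  have C: "hT n = real n * (pp n * c0 n)" by (simp add: hT_def)
  have T: "betaA n + (beta1 n t * aa1 n t + beta2 n t * aa2 n t) = real n / sqrt (real n) / sqrt (real n * (real n + 1))"
    unfolding beta_sums A pc by simp
  have H: "- betaA n + (beta1 n t * aa1 n t + beta2 n t * aa2 n t) = (real n - 2) / sqrt (real n) / sqrt (real n * (real n + 1))"
    unfolding beta_sums B pc by simp
  have F: "2 * real t * beta1 n t + 2 * real t * beta2 n t = real n / sqrt (real n) / sqrt (real n * (real n + 1))"
    unfolding beta_sums C pc by simp
  show ?thesis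
    unfolding d_op_unif[OF v] EA_def E1_def E2_def cf_def
    using T H F TH_disj
    by (auto simp flip: of_real_mult of_real_add of_real_minus of_real_diff simp: algebra_simps)
qed

definition "r0 = (\<lambda>a. unif n a - Lf n \<sigma> (\<lambda>v. - Yk 0 v) (Yk 1) a)"

lemma unif_dec: "unif n = (\<lambda>a. Lf n \<sigma> (\<lambda>v. - Yk 0 v) (Yk 1) a + r0 a)"
  by (simp add: r0_def)

lemma Lf_sym: "Lf n \<sigma> (\<lambda>v. - Yk 0 v) (Yk 1) (rev_arc a) = Lf n \<sigma> (\<lambda>v. - Yk 0 v) (Yk 1) a"
  by (cases a) (auto simp: Lf_def Yk01 rev_arc_def arcs_def)

lemma Inv_r0: "Inv n \<sigma> r0"
proof -
  have supp: "\<forall>a. a \<notin> arcs n \<longrightarrow> r0 a = 0" by (simp add: r0_def unif_def Lf_def)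
  have S: "S_op n r0 = r0"
  proof
    fix a show "S_op n r0 a = r0 a"
    proof (cases "a \<in> arcs n")
      case True
      hence "unif n (rev_arc a) = unif n a" using rev_arc_arcs by (simp add: unif_def)
      thus ?thesis using True unfolding S_op_def r0_def Lf_sym by simp
    next
      case False thus ?thesis using supp by (cases a) (auto simp: S_op_def)
    qed
  qed
  have d: "\<forall>v\<le>n. d_op n \<sigma> r0 v = 0"
  proof (intro allI impI)
    fix v assume v: "v \<le> n"
    have "d_op n \<sigma> r0 v = d_op n \<sigma> (unif n) v - d_op n \<sigma> (Lf n \<sigma> (\<lambda>v. - Yk 0 v) (Yk 1)) v"
      unfolding r0_def using d_op_add[of n \<sigma> "unif n" "\<lambda>a. - Lf n \<sigma> (\<lambda>v. - Yk 0 v) (Yk 1) a" v]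
      by (simp add: d_op_neg)
    also have "\<dots> = 0" unfolding d_op_Lf[OF npos v] Yk01 using f_plus_Tf[OF v] h_val[OF v] by simp
    finally show "d_op n \<sigma> r0 v = 0" .
  qed
  show ?thesis unfolding Inv_def S using supp d by simp
qed

definition "Rk k = ((\<lambda>x a. - S_op n x a)^^k) r0"

lemma psi_eq: "psi n \<sigma> k = (\<lambda>a. Lf n \<sigma> (\<lambda>v. - Yk k v) (Yk (Suc k)) a + Rk k a)"
  using psi_form[OF npos Inv_r0 Yk_rec unif_dec] by (simp add: Rk_def)

lemma NA_TH: "(x,y) \<in> NA \<Longrightarrow> x \<in> Tset \<and> y \<in> Hset \<and> y \<notin> Tset \<and> x \<notin> Hset"
  using TH_disj by (force simp: Tset_def Hset_def)

lemma Yk_T: "x \<in> Tset \<Longrightarrow> Yk k x = of_real (yT n t k)"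
  by (simp add: Yk_def EA_def E1_def E2_def cf_def yT_def algebra_simps)

lemma Yk_H: "y \<in> Hset \<Longrightarrow> y \<notin> Tset \<Longrightarrow> Yk k y = of_real (yH n t k)"
  by (simp add: Yk_def EA_def E1_def E2_def cf_def yH_def algebra_simps)

lemma wt_NA_arc: "(x,y) \<in> NA \<Longrightarrow> wt n \<sigma> (x,y) = - pp n \<and> wt n \<sigma> (y,x) = pp n"
  using snot2 by (auto simp: NA_def wt_def pp_def)

lemma Lf_NA:
  assumes a: "(x,y) \<in> NA"
  shows "Lf n \<sigma> P Q (x,y) = - of_real (pp n) * P y + of_real (pp n) * Q x"
    "Lf n \<sigma> P Q (y,x) = of_real (pp n) * P x - of_real (pp n) * Q y"
  using a wt_NA_arc[OF a] arc_sym[of x y] by (auto simp: Lf_def NA_def rev_arc_def)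

lemma r0_NA:
  assumes a: "(x,y) \<in> NA"
  shows "r0 (x,y) = of_real (rho n)" "r0 (y,x) = of_real (rho n)"
proof -
  have xy: "x \<in> Tset" "y \<in> Hset" "y \<notin> Tset" using NA_TH[OF a] by auto
  have arc: "(x,y) \<in> arcs n" "(y,x) \<in> arcs n" using a arc_sym by (auto simp: NA_def)
  have u: "unif n (x,y) = of_real (c0 n)" "unif n (y,x) = of_real (c0 n)" using arc by (auto simp: unif_def c0_def)
  have d: "yT n t 1 - yH n t 1 = 2 * alA n" by (simp add: yT_def yH_def)
  show "r0 (x,y) = of_real (rho n)"
    unfolding r0_def Lf_NA[OF a] u Yk01 Yk_T[OF xy(1)] Yk_H[OF xy(2,3)] rho_def
    using d by (simp flip: of_real_mult of_real_add of_real_minus of_real_diff add: algebra_simps)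
  show "r0 (y,x) = of_real (rho n)"
    unfolding r0_def Lf_NA[OF a] u Yk01 Yk_T[OF xy(1)] Yk_H[OF xy(2,3)] rho_def
    using d by (simp flip: of_real_mult of_real_add of_real_minus of_real_diff add: algebra_simps)
qed

lemma Rk_NA:
  "\<forall>x y. (x,y) \<in> NA \<longrightarrow> Rk k (x,y) = of_real ((-1)^k * rho n) \<and> Rk k (y,x) = of_real ((-1)^k * rho n)"
proof (induction k)
  case 0 thus ?case using r0_NA by (simp add: Rk_def)
next
  case (Suc k)
  show ?case
  proof (intro allI impI)
    fix x y assume a: "(x,y) \<in> NA"
    have arc: "(x,y) \<in> arcs n" "(y,x) \<in> arcs n" using a arc_sym by (auto simp: NA_def)
    have "Rk (Suc k) = (\<lambda>a. - S_op n (Rk k) a)" by (simp add: Rk_def)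
    thus "Rk (Suc k) (x,y) = of_real ((-1)^Suc k * rho n) \<and> Rk (Suc k) (y,x) = of_real ((-1)^Suc k * rho n)"
      using Suc[rule_format, OF a] arc by (simp add: S_op_def rev_arc_def)
  qed
qed

lemma psi_NA:
  assumes a: "(x,y) \<in> NA"
  shows "psi n \<sigma> k (x,y) = of_real (pp n * (yH n t k + yT n t (Suc k)) + (-1)^k * rho n)"
    "psi n \<sigma> k (y,x) = of_real (- pp n * (yT n t k + yH n t (Suc k)) + (-1)^k * rho n)"
proof -
  have xy: "x \<in> Tset" "y \<in> Hset" "y \<notin> Tset" using NA_TH[OF a] by auto
  show "psi n \<sigma> k (x,y) = of_real (pp n * (yH n t k + yT n t (Suc k)) + (-1)^k * rho n)"
    unfolding psi_eq Lf_NA[OF a] Yk_T[OF xy(1)] Yk_H[OF xy(2,3)] using Rk_NA[of k] a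
    by (simp add: algebra_simps)
  show "psi n \<sigma> k (y,x) = of_real (- pp n * (yT n t k + yH n t (Suc k)) + (-1)^k * rho n)"
    unfolding psi_eq Lf_NA[OF a] Yk_T[OF xy(1)] Yk_H[OF xy(2,3)] using Rk_NA[of k] a
    by (simp add: algebra_simps)
qed

lemma success_formula:
  "success_prob n \<sigma> k = real t * (pp n * (yH n t k + yT n t (Suc k)) + (-1)^k * rho n)\<^sup>2
     + real t * (- pp n * (yT n t k + yH n t (Suc k)) + (-1)^k * rho n)\<^sup>2"
proof -
  have "success_prob n \<sigma> k = real t * \<bar>pp n * (yH n t k + yT n t (Suc k)) + (-1)^k * rho n\<bar>\<^sup>2
     + real t * \<bar>- pp n * (yT n t k + yH n t (Suc k)) + (-1)^k * rho n\<bar>\<^sup>2"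
  proof (rule success_split)
    fix a assume "a \<in> NA"
    then obtain x y where a: "a = (x,y)" "(x,y) \<in> NA" by (cases a) auto
    show "cmod (psi n \<sigma> k a) = \<bar>pp n * (yH n t k + yT n t (Suc k)) + (-1)^k * rho n\<bar>"
      unfolding a psi_NA[OF a(2)] by (rule norm_of_real)
    show "cmod (psi n \<sigma> k (rev_arc a)) = \<bar>- pp n * (yT n t k + yH n t (Suc k)) + (-1)^k * rho n\<bar>"
    proof -
      have "rev_arc a = (y,x)" by (simp add: a rev_arc_def)
      thus ?thesis by (simp only: psi_NA(2)[OF a(2)] norm_of_real)
    qed
  qed
  thus ?thesis by simp
qed

end


lemma sin_rec: "sin (real (Suc (Suc k)) * x) = 2 * cos x * sin (real (Suc k) * x) - sin (real k * x)"
proof -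
  have "sin (real (Suc k) * x + x) + sin (real (Suc k) * x - x) = 2 * cos x * sin (real (Suc k) * x)"
    by (simp add: sin_add sin_diff)
  moreover have "real (Suc (Suc k)) * x = real (Suc k) * x + x" "real k * x = real (Suc k) * x - x"
    by (simp_all add: algebra_simps)
  ultimately show ?thesis by simp
qed

lemma cos_rec: "cos (real (Suc (Suc k)) * x) = 2 * cos x * cos (real (Suc k) * x) - cos (real k * x)"
proof -
  have "cos (real (Suc k) * x + x) + cos (real (Suc k) * x - x) = 2 * cos x * cos (real (Suc k) * x)"
    by (simp add: cos_add cos_diff)
  moreover have "real (Suc (Suc k)) * x = real (Suc k) * x + x" "real k * x = real (Suc k) * x - x"
    by (simp_all add: algebra_simps)
  ultimately show ?thesis by simp
qed

lemma cs_id: "cos x * (cos x * y) + sin x * (sin x * y) = (y::real)"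
proof -
  have h: "cos x * cos x + sin x * sin x = 1" by (rule sin_cos_squared_add3)
  have "(cos x * cos x + sin x * sin x) * y = y" unfolding h by simp
  thus ?thesis by (simp only: distrib_right mult.assoc)
qed

lemma Ch_closed:
  assumes "sin x \<noteq> 0"
  shows "Ch (cos x) k = sin (real k * x) * (1 + cos x) / sin x - cos (real k * x)"
proof (induction "cos x" k rule: Ch.induct)
  case 1 thus ?case by simp
next
  case 2 thus ?case using assms by simp
next
  case (3 k)
  show ?case unfolding Ch.simps 3 sin_rec[of k x] cos_rec[of k x]
    using assms by (simp add: field_simps)
qed

lemma Ch_E:
  assumes "sin x \<noteq> 0"
  shows "Ch (cos x) (Suc k) - Ch (cos x) k = 2 * cos (real k * x)"
proof -
  have s: "sin x ^ 2 = 1 - cos x ^ 2" by (simp add: sin_squared_eq)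
  have "real (Suc k) * x = real k * x + x" by (simp add: algebra_simps)
  hence "Ch (cos x) (Suc k) - Ch (cos x) k = (sin (real k * x + x) - sin (real k * x)) * (1 + cos x) / sin x - (cos (real k * x + x) - cos (real k * x))"
    unfolding Ch_closed[OF assms] using assms by (simp add: field_simps)
  also have "\<dots> = 2 * cos (real k * x)"
    unfolding sin_add cos_add using assms s by (simp add: field_simps power2_eq_square) (simp add: cs_id)
  finally show ?thesis .
qed

lemma Ch_D:
  assumes "sin x \<noteq> 0"
  shows "Ch (cos x) k + Ch (cos x) (Suc k) = 2 * (1 + cos x) * sin (real k * x) / sin x"
proof -
  have s: "sin x ^ 2 = 1 - cos x ^ 2" by (simp add: sin_squared_eq)
  have "real (Suc k) * x = real k * x + x" by (simp add: algebra_simps)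
  hence "Ch (cos x) k + Ch (cos x) (Suc k) = (sin (real k * x) + sin (real k * x + x)) * (1 + cos x) / sin x - (cos (real k * x) + cos (real k * x + x))"
    unfolding Ch_closed[OF assms] using assms by (simp add: field_simps)
  also have "\<dots> = 2 * (1 + cos x) * sin (real k * x) / sin x"
    unfolding sin_add cos_add using assms s by (simp add: field_simps power2_eq_square) (simp add: cs_id)
  finally show ?thesis .
qed


lemma x_cos_le_sin:
  fixes x :: real
  assumes "0 \<le> x" "x \<le> pi"
  shows "x * cos x \<le> sin x"
proof -
  let ?f = "\<lambda>x. sin x - x * cos x"
  have "?f 0 \<le> ?f x"
  proof (rule DERIV_nonneg_imp_nondecreasing[OF assms(1)])
    fix u assume u: "0 \<le> u" "u \<le> x"
    have "(?f has_real_derivative u * sin u) (at u)"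
      by (auto intro!: derivative_eq_intros simp: field_simps)
    moreover have "u * sin u \<ge> 0" using u assms by (intro mult_nonneg_nonneg sin_ge_zero) auto
    ultimately show "\<exists>y. (?f has_real_derivative y) (at u) \<and> 0 \<le> y" by blast
  qed
  thus ?thesis by simp
qed

definition "Lo (x::real) = (2*x-2)^2 * ((x+1)*(x-1))^2 / ((2*x+6) * x^2 * (x+1) * (x+3)^2 * 2)"
definition "Up (x::real) = (2*x+6) * (x*(x+3))^2 / (x^2 * (x+1) * (x-1)^2 * (2 - 2/x))"
definition "b2 (x::real) = 4*(x+1)/(x*(x-1))"

lemma G1_alg:
  fixes N t R d e a W M :: real
  assumes "N \<noteq> 0" "M \<noteq> 0" "t \<noteq> 0" "R \<noteq> 0" "d \<noteq> 0" "e \<noteq> 0"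
  shows "8 * t * (1 / N) * a\<^sup>2 * ((1 / N) * (1 / (N * M)) * W\<^sup>2) / (2 * t * R)\<^sup>2 / ((d / N) * e)
    = (2 * a\<^sup>2 / (t * d)) * (W\<^sup>2 / (N\<^sup>2 * M)) / R\<^sup>2 / e"
  using assms by (simp add: field_simps power2_eq_square)

locale nt =
  fixes n t :: nat
  assumes n10: "n \<ge> 10" and t1: "t \<ge> 1" and tb: "2 * t \<le> n + 1"
begin

abbreviation "N \<equiv> real n"
definition "dl = (real n + 3 - RR n t) / 2"
definition "Qd = real n + 3 + RR n t"

lemma RR: "RR n t \<ge> N - 1" "RR n t \<le> N + 3" "(RR n t)\<^sup>2 = (N + 3)\<^sup>2 - 16 * real t"
  using RR_facts[OF tb] by auto

lemma tR: "2 * real t \<le> N + 1" "real t \<ge> 1" "N \<ge> 10" using tb t1 n10 by linarith+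

lemma dlQ: "dl * Qd = 8 * real t"
proof -
  have "dl * Qd = ((N + 3)\<^sup>2 - (RR n t)\<^sup>2) / 2" unfolding dl_def Qd_def by (simp add: power2_eq_square algebra_simps)
  thus ?thesis using RR(3) by simp
qed

lemma Qd_bounds: "Qd \<ge> 2 * N + 2" "Qd \<le> 2 * N + 6" using RR unfolding Qd_def by auto

lemma dl_bounds: "dl > 0" "dl \<le> 2" "dl \<le> 4 * real t / N" "dl \<ge> real t / N"
proof -
  have Qp: "Qd > 0" using Qd_bounds tR by linarith
  have dQ: "dl = 8 * real t / Qd" using dlQ Qp by (simp add: field_simps)
  show "dl > 0" unfolding dQ using Qp tR by simp
  show "dl \<le> 2" using RR unfolding dl_def by simp
  show "dl \<le> 4 * real t / N" unfolding dQ using Qd_bounds tR Qp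
    by (simp add: field_simps)
  show "dl \<ge> real t / N" unfolding dQ using Qd_bounds tR Qp
    by (simp add: field_simps)
qed

lemma mu1_eq: "mu1 n t = N - dl" by (simp add: mu1_def dl_def field_simps)
lemma lam1_eq: "lam1 n t = 1 - dl / N" using tR by (simp add: lam1_def mu1_eq field_simps)
lemma lam1_bounds: "lam1 n t \<ge> 1/2" "lam1 n t < 1"
proof -
  have "dl / N \<le> 2 / N" using dl_bounds tR by (simp add: divide_right_mono)
  moreover have "2 / N \<le> 1/2" using tR by (simp add: field_simps)
  ultimately show "lam1 n t \<ge> 1/2" unfolding lam1_eq by linarith
  show "lam1 n t < 1" unfolding lam1_eq using dl_bounds tR by simp
qed

lemma mu2_bounds: "mu2 n t \<ge> -3" "mu2 n t \<le> -1" using RR by (auto simp: mu2_def)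
lemma lam2_bounds: "\<bar>lam2 n t\<bar> \<le> 1/2"
proof -
  have "\<bar>mu2 n t\<bar> \<le> 3" using mu2_bounds by auto
  hence "\<bar>mu2 n t\<bar> / N \<le> 3 / N" using tR by (simp add: divide_right_mono)
  moreover have "3 / N \<le> 1/2" using tR by (simp add: field_simps)
  ultimately have "\<bar>mu2 n t\<bar> / N \<le> 1/2" by linarith
  thus ?thesis unfolding lam2_def using tR by (simp add: abs_div)
qed

lemma lamA_bounds: "lamA n > 0" "lamA n \<le> 1/2" using tR by (auto simp: lamA_def field_simps)

definition "th1 = arccos (lam1 n t)"
definition "th2 = arccos (lam2 n t)"
definition "thA = arccos (lamA n)"

lemma arccos_facts:
  assumes "\<bar>l\<bar> < 1"
  shows "cos (arccos l) = l" "sin (arccos l) = sqrt (1 - l\<^sup>2)" "sin (arccos l) > 0"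
proof -
  show "cos (arccos l) = l" using assms by (intro cos_arccos) auto
  show s: "sin (arccos l) = sqrt (1 - l\<^sup>2)" using assms by (intro sin_arccos) auto
  have "l\<^sup>2 < 1" using assms by (simp add: abs_square_less_1)
  thus "sin (arccos l) > 0" unfolding s by simp
qed

lemma lam1_abs: "\<bar>lam1 n t\<bar> < 1" using lam1_bounds by auto
lemma lam2_abs: "\<bar>lam2 n t\<bar> < 1" using lam2_bounds by auto
lemma lamA_abs: "\<bar>lamA n\<bar> < 1" using lamA_bounds by auto

lemma th1_facts: "cos th1 = lam1 n t" "sin th1 = sqrt (1 - (lam1 n t)\<^sup>2)" "sin th1 > 0"
  "th1 > 0" "th1 \<le> pi / 2"
proof -
  show "cos th1 = lam1 n t" "sin th1 = sqrt (1 - (lam1 n t)\<^sup>2)" "sin th1 > 0"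
    using arccos_facts[OF lam1_abs] by (auto simp: th1_def)
  show "th1 \<le> pi / 2" unfolding th1_def using lam1_bounds by (intro arccos_le_pi2) auto
  have "th1 \<ge> 0" unfolding th1_def using lam1_abs by (intro arccos_lbound) auto
  moreover have "th1 \<noteq> 0" using \<open>cos th1 = lam1 n t\<close> lam1_bounds by auto
  ultimately show "th1 > 0" by simp
qed

lemma th2_facts: "cos th2 = lam2 n t" "sin th2 \<ge> 1/2"
proof -
  show "cos th2 = lam2 n t" using arccos_facts[OF lam2_abs] by (simp add: th2_def)
  have "\<bar>lam2 n t\<bar> \<le> \<bar>1/2\<bar>" using lam2_bounds by simp
  hence "(lam2 n t)\<^sup>2 \<le> (1/2)\<^sup>2" by (simp only: abs_le_square_iff)
  hence "1/4 \<le> 1 - (lam2 n t)\<^sup>2" by (simp add: power2_eq_square)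
  hence "sqrt (1/4) \<le> sqrt (1 - (lam2 n t)\<^sup>2)" by (rule real_sqrt_le_mono)
  moreover have "sqrt (1/4) = (1/2::real)" by (simp add: real_sqrt_divide)
  ultimately show "sin th2 \<ge> 1/2" using arccos_facts[OF lam2_abs] by (simp add: th2_def)
qed

lemma thA_facts: "cos thA = lamA n" "sin thA \<noteq> 0"
  using arccos_facts[OF lamA_abs] by (auto simp: thA_def)

lemma pp_sq: "(pp n)\<^sup>2 = 1 / N" using tR by (simp add: pp_def power_divide)
lemma c0_sq: "(c0 n)\<^sup>2 = 1 / (N * (N + 1))" using tR by (simp add: c0_def power_divide)
lemma c0_pos: "c0 n > 0" using tR by (simp add: c0_def)
lemma pp_pos: "pp n > 0" using tR by (simp add: pp_def)
lemma c0_le: "c0 n \<le> 1 / N"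
proof -
  have "sqrt (N * N) \<le> sqrt (N * (N + 1))" using tR by (intro real_sqrt_le_mono) (simp add: algebra_simps)
  hence "N \<le> sqrt (N * (N + 1))" using tR by simp
  thus ?thesis unfolding c0_def using tR by (intro divide_left_mono) auto
qed

lemma ppalA: "pp n * alA n = c0 n / (N + 1)"
proof -
  have "pp n * alA n = (pp n)\<^sup>2 * c0 n / (1 + 1 / N)" by (simp add: alA_def betaA_def lamA_def power2_eq_square)
  thus ?thesis unfolding pp_sq using tR by (simp add: field_simps)
qed

lemma rho_eq: "rho n = c0 n * (N - 1) / (N + 1)"
  unfolding rho_def using ppalA tR by (simp add: field_simps)

definition "EE k = 2 * cos (real k * thA)"
definition "Aq k = pp n * alA n * EE k + (-1)^k * rho n"
definition "B1 k = 2 * pp n * (beta1 n t * aa1 n t) * sin (real k * th1) / sin th1"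
definition "B2 k = 2 * pp n * (beta2 n t * aa2 n t) * sin (real k * th2) / sin th2"

lemma lam1_ne: "1 + lam1 n t \<noteq> 0" using lam1_bounds by linarith
lemma lam2_ne: "1 + lam2 n t \<noteq> 0" using lam2_bounds by linarith

lemma D1: "al1 n t * aa1 n t * (Ch (lam1 n t) k + Ch (lam1 n t) (Suc k)) = 2 * (beta1 n t * aa1 n t) * sin (real k * th1) / sin th1"
proof -
  have h: "Ch (lam1 n t) k + Ch (lam1 n t) (Suc k) = 2 * (1 + lam1 n t) * sin (real k * th1) / sin th1"
    using Ch_D[of th1 k] th1_facts by simp
  have "sin th1 \<noteq> 0" using th1_facts by simp
  have b: "beta1 n t = al1 n t * (1 + lam1 n t)" using lam1_ne by (simp add: al1_def)
  show ?thesis unfolding h b by (simp add: algebra_simps)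
qed

lemma D2: "al2 n t * aa2 n t * (Ch (lam2 n t) k + Ch (lam2 n t) (Suc k)) = 2 * (beta2 n t * aa2 n t) * sin (real k * th2) / sin th2"
proof -
  have s: "sin th2 \<noteq> 0" using th2_facts by linarith
  have h: "Ch (lam2 n t) k + Ch (lam2 n t) (Suc k) = 2 * (1 + lam2 n t) * sin (real k * th2) / sin th2"
    using Ch_D[OF s, of k] th2_facts by simp
  have b: "beta2 n t = al2 n t * (1 + lam2 n t)" using lam2_ne by (simp add: al2_def)
  show ?thesis unfolding h b by (simp add: algebra_simps)
qed

lemma EA_eq: "Ch (lamA n) (Suc k) - Ch (lamA n) k = EE k"
  using Ch_E[of thA k] thA_facts by (simp add: EE_def)

lemma succ_decomp:
  "real t * (pp n * (yH n t k + yT n t (Suc k)) + (-1)^k * rho n)\<^sup>2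
     + real t * (- pp n * (yT n t k + yH n t (Suc k)) + (-1)^k * rho n)\<^sup>2
   = 2 * real t * (Aq k)\<^sup>2 + 2 * real t * (B1 k + B2 k)\<^sup>2"
proof -
  have e1: "yH n t k + yT n t (Suc k) = alA n * (Ch (lamA n) (Suc k) - Ch (lamA n) k)
     + al1 n t * aa1 n t * (Ch (lam1 n t) k + Ch (lam1 n t) (Suc k)) + al2 n t * aa2 n t * (Ch (lam2 n t) k + Ch (lam2 n t) (Suc k))"
    by (simp add: yT_def yH_def algebra_simps)
  have e2: "yT n t k + yH n t (Suc k) = - alA n * (Ch (lamA n) (Suc k) - Ch (lamA n) k)
     + al1 n t * aa1 n t * (Ch (lam1 n t) k + Ch (lam1 n t) (Suc k)) + al2 n t * aa2 n t * (Ch (lam2 n t) k + Ch (lam2 n t) (Suc k))"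
    by (simp add: yT_def yH_def algebra_simps)
  have X: "pp n * (yH n t k + yT n t (Suc k)) + (-1)^k * rho n = Aq k + (B1 k + B2 k)"
    unfolding e1 EA_eq D1 D2 Aq_def B1_def B2_def by (simp add: algebra_simps)
  have Y: "- pp n * (yT n t k + yH n t (Suc k)) + (-1)^k * rho n = Aq k - (B1 k + B2 k)"
    unfolding e2 EA_eq D1 D2 Aq_def B1_def B2_def by (simp add: algebra_simps)
  show ?thesis unfolding X Y by (simp add: power2_eq_square algebra_simps)
qed

lemma tri: "\<bar>a\<bar> \<le> X \<Longrightarrow> \<bar>b\<bar> = Y \<Longrightarrow> \<bar>a + b\<bar> \<le> X + (Y::real)"
  by (metis abs_triangle_ineq add_mono order_trans order_refl)

lemma Aq_bound: "\<bar>Aq k\<bar> \<le> 1 / N"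
proof -
  have "\<bar>EE k\<bar> \<le> 2" using abs_cos_le_one[of "real k * thA"] by (simp add: EE_def abs_mult)
  hence "\<bar>pp n * alA n * EE k\<bar> \<le> c0 n / (N + 1) * 2"
  proof -
    have p: "c0 n / (N + 1) > 0" using c0_pos tR by simp
    have "c0 n / (N + 1) * \<bar>EE k\<bar> \<le> c0 n / (N + 1) * 2"
      using p \<open>\<bar>EE k\<bar> \<le> 2\<close> by (intro mult_left_mono) auto
    thus ?thesis unfolding ppalA abs_mult using p c0_pos by simp
  qed
  moreover have "\<bar>(-1)^k * rho n\<bar> = c0 n * (N - 1) / (N + 1)"
    using c0_pos tR by (simp add: rho_eq abs_mult)
  ultimately have "\<bar>Aq k\<bar> \<le> c0 n / (N + 1) * 2 + c0 n * (N - 1) / (N + 1)"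
    unfolding Aq_def by (rule tri)
  also have "\<dots> = c0 n"
  proof -
    have "c0 n / (N + 1) * 2 + c0 n * (N - 1) / (N + 1) = (c0 n * 2 + c0 n * (N - 1)) / (N + 1)"
      by (simp add: add_divide_distrib)
    also have "c0 n * 2 + c0 n * (N - 1) = c0 n * (N + 1)" by (simp add: algebra_simps)
    finally show ?thesis using tR by simp
  qed
  finally show ?thesis using c0_le by linarith
qed

lemma aa1_eq: "aa1 n t = 2 * real t - dl" by (simp add: aa1_def mu1_eq)
lemma aa2_bounds: "\<bar>aa2 n t\<bar> \<le> N + 1"
  using mu2_bounds tR by (simp add: aa2_def abs_le_iff)

lemma num2: "aa1 n t * hT n - 2 * real t * yh n = pp n * c0 n * (2 * real t - N * dl)"
  unfolding aa1_eq hT_def yh_def by (simp add: algebra_simps)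

lemma B2_bound: "\<bar>B2 k\<bar> \<le> 4 * (N + 1) / (N * (N - 1))"
proof -
  have R: "RR n t \<ge> N - 1" "N - 1 > 0" using RR tR by auto
  have w: "\<bar>2 * real t - N * dl\<bar> \<le> 2 * N"
  proof -
    have "N * dl \<le> N * 2" using dl_bounds tR by (intro mult_left_mono) auto
    moreover have "N * dl \<ge> 0" using dl_bounds tR by simp
    ultimately show ?thesis using tR unfolding abs_le_iff by linarith
  qed
  have b: "beta2 n t * aa2 n t = aa2 n t * (pp n * c0 n * (2 * real t - N * dl)) / (2 * real t * RR n t)"
    unfolding beta2_def num2 by simp
  have "\<bar>beta2 n t * aa2 n t\<bar> = \<bar>aa2 n t\<bar> * (pp n * c0 n) * \<bar>2 * real t - N * dl\<bar> / (2 * real t * RR n t)"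
    unfolding b using pp_pos c0_pos R tR by (simp add: abs_mult abs_div)
  also have "\<dots> \<le> (N + 1) * (pp n * c0 n) * (2 * N) / (2 * 1 * (N - 1))"
  proof (rule frac_le)
    show "0 \<le> (N + 1) * (pp n * c0 n) * (2 * N)" using pp_pos c0_pos tR by simp
    show "\<bar>aa2 n t\<bar> * (pp n * c0 n) * \<bar>2 * real t - N * dl\<bar> \<le> (N + 1) * (pp n * c0 n) * (2 * N)"
      using aa2_bounds w pp_pos c0_pos by (intro mult_mono) auto
    show "0 < 2 * 1 * (N - 1)" using R by simp
    show "2 * 1 * (N - 1) \<le> 2 * real t * RR n t" using R tR by (intro mult_mono) auto
  qed
  also have "\<dots> = (N + 1) * (pp n * c0 n) * N / (N - 1)" using R by (simp add: field_simps)
  finally have bb: "\<bar>beta2 n t * aa2 n t\<bar> \<le> (N + 1) * (pp n * c0 n) * N / (N - 1)" .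
  have "\<bar>B2 k\<bar> = 2 * pp n * \<bar>beta2 n t * aa2 n t\<bar> * \<bar>sin (real k * th2)\<bar> / sin th2"
    unfolding B2_def using pp_pos th2_facts by (simp add: abs_mult abs_div)
  also have "\<dots> \<le> 2 * pp n * ((N + 1) * (pp n * c0 n) * N / (N - 1)) * 1 / (1/2)"
  proof (rule frac_le)
    show "0 \<le> 2 * pp n * ((N + 1) * (pp n * c0 n) * N / (N - 1)) * 1" using pp_pos c0_pos R by simp
    show "2 * pp n * \<bar>beta2 n t * aa2 n t\<bar> * \<bar>sin (real k * th2)\<bar> \<le> 2 * pp n * ((N + 1) * (pp n * c0 n) * N / (N - 1)) * 1"
      using bb pp_pos c0_pos R tR by (intro mult_mono) auto
  qed (use th2_facts in auto)
  also have "\<dots> = 4 * (pp n)\<^sup>2 * c0 n * N * (N + 1) / (N - 1)" by (simp add: power2_eq_square field_simps)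
  also have "\<dots> = 4 * c0 n * (N + 1) / (N - 1)" unfolding pp_sq using tR by (simp add: field_simps)
  also have "\<dots> \<le> 4 * (1 / N) * (N + 1) / (N - 1)"
    using c0_le R by (intro divide_right_mono mult_right_mono) auto
  finally show ?thesis by (simp add: field_simps)
qed

definition "W = N * (N - mu2 n t) - 2 * real t"
definition "G1 = 8 * real t * (pp n)\<^sup>2 * (beta1 n t * aa1 n t)\<^sup>2 / (sin th1)\<^sup>2"

lemma B1_sq: "2 * real t * (B1 k)\<^sup>2 = G1 * (sin (real k * th1))\<^sup>2"
  unfolding B1_def G1_def by (simp add: power2_eq_square field_simps)

lemma W_bounds: "W \<ge> (N + 1) * (N - 1)" "W \<le> N * (N + 3)"
proof -
  have "N * (N + 1) \<le> N * (N - mu2 n t)" "N * (N - mu2 n t) \<le> N * (N + 3)"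
    using mu2_bounds tR by (intro mult_left_mono; simp)+
  thus "W \<ge> (N + 1) * (N - 1)" "W \<le> N * (N + 3)" unfolding W_def using tR by (simp_all add: algebra_simps)
qed

lemma num1: "2 * real t * yh n - aa2 n t * hT n = pp n * c0 n * W"
  unfolding W_def yh_def hT_def aa2_def by (simp add: algebra_simps)

lemma sin1_sq: "(sin th1)\<^sup>2 = (dl / N) * (2 - dl / N)"
proof -
  have "(sin th1)\<^sup>2 = 1 - (cos th1)\<^sup>2" by (simp add: sin_squared_eq)
  thus ?thesis unfolding th1_facts(1) lam1_eq by (simp add: power2_eq_square algebra_simps)
qed

lemma aa1_ratio: "2 * (aa1 n t)\<^sup>2 / (real t * dl) = (Qd - 4)\<^sup>2 / Qd"
proof -
  have Qp: "Qd > 0" using Qd_bounds tR by linarith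
  have tq: "real t = dl * Qd / 8" using dlQ by simp
  have a: "aa1 n t = dl * (Qd - 4) / 4" unfolding aa1_eq tq by (simp add: field_simps)
  show ?thesis unfolding a tq using Qp dl_bounds by (simp add: field_simps power2_eq_square)
qed

lemma G1_eq: "G1 = ((Qd - 4)\<^sup>2 / Qd) * (W\<^sup>2 / (N\<^sup>2 * (N + 1))) / (RR n t)\<^sup>2 / (2 - dl / N)"
proof -
  have Rp: "RR n t > 0" using RR tR by linarith
  have d2: "2 - dl / N > 0"
  proof -
    have "dl / N \<le> 2 / N" using dl_bounds tR by (simp add: divide_right_mono)
    moreover have "2 / N < 2" using tR by (simp add: field_simps)
    ultimately show ?thesis by linarith
  qed
  have b: "beta1 n t * aa1 n t = aa1 n t * (pp n * c0 n * W) / (2 * real t * RR n t)"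
    unfolding beta1_def num1 by simp
  have "G1 = 8 * real t * (pp n)\<^sup>2 * (aa1 n t)\<^sup>2 * ((pp n)\<^sup>2 * (c0 n)\<^sup>2 * W\<^sup>2) / (2 * real t * RR n t)\<^sup>2 / ((dl / N) * (2 - dl / N))"
    unfolding G1_def b sin1_sq by (simp add: power_mult_distrib power_divide field_simps)
  also have "\<dots> = (2 * (aa1 n t)\<^sup>2 / (real t * dl)) * (W\<^sup>2 / (N\<^sup>2 * (N + 1))) / (RR n t)\<^sup>2 / (2 - dl / N)"
    unfolding pp_sq c0_sq using tR Rp d2 dl_bounds by (intro G1_alg) auto
  finally show ?thesis unfolding aa1_ratio .
qed

lemma F_facts: "(Qd - 4)\<^sup>2 / Qd \<ge> (2*N-2)\<^sup>2 / (2*N+6)" "(Qd - 4)\<^sup>2 / Qd \<le> 2*N+6"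
  "W\<^sup>2 / (N\<^sup>2 * (N + 1)) \<ge> ((N+1)*(N-1))\<^sup>2 / (N\<^sup>2 * (N + 1))"
  "W\<^sup>2 / (N\<^sup>2 * (N + 1)) \<le> (N*(N+3))\<^sup>2 / (N\<^sup>2 * (N + 1))"
  "(RR n t)\<^sup>2 \<ge> (N-1)\<^sup>2" "(RR n t)\<^sup>2 \<le> (N+3)\<^sup>2"
  "2 - dl / N \<ge> 2 - 2 / N" "2 - dl / N \<le> 2"
proof -
  have Q: "2*N+2 \<le> Qd" "Qd \<le> 2*N+6" using Qd_bounds by auto
  have a: "(2*N-2)\<^sup>2 \<le> (Qd - 4)\<^sup>2" using Q tR by (intro power_mono) auto
  show "(Qd - 4)\<^sup>2 / Qd \<ge> (2*N-2)\<^sup>2 / (2*N+6)"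
    by (rule frac_le) (use a Q tR in auto)
  have "(Qd - 4)\<^sup>2 \<le> Qd\<^sup>2" using Q tR by (intro power_mono) auto
  hence "(Qd - 4)\<^sup>2 / Qd \<le> Qd\<^sup>2 / Qd" using Q tR by (intro divide_right_mono) auto
  also have "\<dots> = Qd" using Q tR by (simp add: power2_eq_square)
  finally show "(Qd - 4)\<^sup>2 / Qd \<le> 2*N+6" using Q by linarith
  have w: "0 \<le> (N+1)*(N-1)" using tR by simp
  have W0: "0 \<le> W" using W_bounds w by linarith
  show "W\<^sup>2 / (N\<^sup>2 * (N + 1)) \<ge> ((N+1)*(N-1))\<^sup>2 / (N\<^sup>2 * (N + 1))"
    using W_bounds w W0 tR by (intro divide_right_mono power_mono) auto
  show "W\<^sup>2 / (N\<^sup>2 * (N + 1)) \<le> (N*(N+3))\<^sup>2 / (N\<^sup>2 * (N + 1))"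
    using W_bounds w W0 tR by (intro divide_right_mono power_mono) auto
  show "(RR n t)\<^sup>2 \<ge> (N-1)\<^sup>2" using RR tR by (intro power_mono) auto
  show "(RR n t)\<^sup>2 \<le> (N+3)\<^sup>2" using RR tR by (intro power_mono) auto
  have "dl / N \<le> 2 / N" using dl_bounds tR by (simp add: divide_right_mono)
  thus "2 - dl / N \<ge> 2 - 2 / N" by linarith
  show "2 - dl / N \<le> 2" using dl_bounds tR by simp
qed

lemma G1_lower: "Lo N \<le> G1"
proof -
  note F = F_facts
  have p: "2 - 2 / N > 0" "(N - 1)\<^sup>2 > 0" using tR by (auto simp: field_simps)
  have l: "Lo N = ((2*N-2)\<^sup>2 / (2*N+6)) * (((N+1)*(N-1))\<^sup>2 / (N\<^sup>2 * (N + 1))) / (N+3)\<^sup>2 / 2"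
    unfolding Lo_def using tR by (simp add: field_simps)
  have m: "((2*N-2)\<^sup>2 / (2*N+6)) * (((N+1)*(N-1))\<^sup>2 / (N\<^sup>2 * (N + 1)))
     \<le> ((Qd - 4)\<^sup>2 / Qd) * (W\<^sup>2 / (N\<^sup>2 * (N + 1)))"
    using F(1,3) tR Qd_bounds by (intro mult_mono) auto
  have h1: "((2*N-2)\<^sup>2 / (2*N+6)) * (((N+1)*(N-1))\<^sup>2 / (N\<^sup>2 * (N + 1))) / (N+3)\<^sup>2
     \<le> ((Qd - 4)\<^sup>2 / Qd) * (W\<^sup>2 / (N\<^sup>2 * (N + 1))) / (RR n t)\<^sup>2"
    by (rule frac_le) (use m F(5,6) p tR Qd_bounds in auto)
  have "((2*N-2)\<^sup>2 / (2*N+6)) * (((N+1)*(N-1))\<^sup>2 / (N\<^sup>2 * (N + 1))) / (N+3)\<^sup>2 / 2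
     \<le> ((Qd - 4)\<^sup>2 / Qd) * (W\<^sup>2 / (N\<^sup>2 * (N + 1))) / (RR n t)\<^sup>2 / (2 - dl / N)"
    by (rule frac_le) (use h1 F(7,8) p tR Qd_bounds in auto)
  thus ?thesis unfolding l G1_eq .
qed

lemma G1_upper: "G1 \<le> Up N"
proof -
  note F = F_facts
  have p: "2 - 2 / N > 0" "(N - 1)\<^sup>2 > 0" using tR by (auto simp: field_simps)
  have u: "Up N = (2*N+6) * ((N*(N+3))\<^sup>2 / (N\<^sup>2 * (N + 1))) / (N-1)\<^sup>2 / (2 - 2 / N)"
    unfolding Up_def using tR by (simp add: field_simps)
  have Qp: "Qd > 0" using Qd_bounds tR by linarith
  have m: "((Qd - 4)\<^sup>2 / Qd) * (W\<^sup>2 / (N\<^sup>2 * (N + 1))) \<le> (2*N+6) * ((N*(N+3))\<^sup>2 / (N\<^sup>2 * (N + 1)))"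
    using F(2,4) tR Qp by (intro mult_mono) auto
  have h0: "((Qd - 4)\<^sup>2 / Qd) * (W\<^sup>2 / (N\<^sup>2 * (N + 1))) / (RR n t)\<^sup>2
     \<le> (2*N+6) * ((N*(N+3))\<^sup>2 / (N\<^sup>2 * (N + 1))) / (N-1)\<^sup>2"
    by (rule frac_le) (use m F(5) p tR in auto)
  have "((Qd - 4)\<^sup>2 / Qd) * (W\<^sup>2 / (N\<^sup>2 * (N + 1))) / (RR n t)\<^sup>2 / (2 - dl / N)
     \<le> (2*N+6) * ((N*(N+3))\<^sup>2 / (N\<^sup>2 * (N + 1))) / (N-1)\<^sup>2 / (2 - 2 / N)"
    by (rule frac_le) (use h0 F(7) p tR in auto)
  thus ?thesis unfolding u G1_eq .
qed

end


definition "err (x::real) = (x+1)/x^2 + \<bar>Up x - 1\<bar> + \<bar>Lo x - 1\<bar> + 4 * Up x / x + Up x / sqrt x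
   + (x+1) * sqrt x * (b2 x)^2 + (x+1) * (b2 x)^2"

lemma amgm: "c > 0 \<Longrightarrow> 2 * \<bar>a\<bar> * \<bar>b\<bar> \<le> a\<^sup>2 / c + c * (b::real)\<^sup>2"
proof -
  assume c: "c > 0"
  have "0 \<le> (\<bar>a\<bar> - c * \<bar>b\<bar>)\<^sup>2 / c" using c by simp
  also have "(\<bar>a\<bar> - c * \<bar>b\<bar>)\<^sup>2 / c = a\<^sup>2 / c + c * b\<^sup>2 - 2 * \<bar>a\<bar> * \<bar>b\<bar>"
    using c by (simp add: power2_eq_square field_simps)
  finally show ?thesis by simp
qed

context nt
begin

lemma lambda_eq: "lambda_m n t = lam1 n t"
  by (simp add: lambda_m_def lam1_def mu1_def RR_def field_simps)

definition "kk = k_f n t"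

lemma kk_th: "real kk * th1 \<le> pi / 2" "real kk * th1 > pi / 2 - th1"
proof -
  let ?x = "pi / (2 * th1)"
  have xp: "?x > 0" using th1_facts by simp
  have k: "real kk = of_int \<lfloor>?x\<rfloor>"
    unfolding kk_def k_f_def lambda_eq th1_def[symmetric] using xp by simp
  have f: "of_int \<lfloor>?x\<rfloor> \<le> ?x" "?x < of_int \<lfloor>?x\<rfloor> + 1" by linarith+
  have "real kk * th1 \<le> ?x * th1" unfolding k using f th1_facts by (intro mult_right_mono) auto
  thus "real kk * th1 \<le> pi / 2" using th1_facts by simp
  have "?x * th1 < (real kk + 1) * th1" unfolding k using f th1_facts by (intro mult_strict_right_mono) auto
  thus "real kk * th1 > pi / 2 - th1" using th1_facts by (simp add: algebra_simps)
qed

lemma cos_kk: "0 \<le> cos (real kk * th1)" "cos (real kk * th1) \<le> sin th1"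
proof -
  have k0: "real kk * th1 \<ge> 0" using th1_facts by simp
  show "0 \<le> cos (real kk * th1)" using kk_th k0 pi_gt_zero by (intro cos_ge_zero) linarith+
  have "cos (real kk * th1) = sin (pi / 2 - real kk * th1)" by (simp add: cos_sin_eq)
  also have "\<dots> \<le> sin th1" using kk_th k0 th1_facts by (intro sin_monotone_2pi_le) auto
  finally show "cos (real kk * th1) \<le> sin th1" .
qed

lemma s2_bounds: "(sin (real kk * th1))\<^sup>2 \<ge> 1 - 4 / N" "(sin (real kk * th1))\<^sup>2 \<le> 1"
proof -
  have "(cos (real kk * th1))\<^sup>2 \<le> (sin th1)\<^sup>2" using cos_kk by (intro power_mono) auto
  also have "(sin th1)\<^sup>2 \<le> 4 / N"
  proof -
    have "dl / N \<le> 2 / N" "0 \<le> dl / N" using dl_bounds tR by (auto simp: divide_right_mono)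
    moreover have "2 / N \<le> 2" using tR by (simp add: field_simps)
    ultimately have "(dl / N) * (2 - dl / N) \<le> (2 / N) * 2" by (intro mult_mono) auto
    thus ?thesis unfolding sin1_sq by simp
  qed
  finally show "(sin (real kk * th1))\<^sup>2 \<ge> 1 - 4 / N" by (simp add: sin_squared_eq)
  show "(sin (real kk * th1))\<^sup>2 \<le> 1" using abs_sin_le_one[of "real kk * th1"] by (simp add: abs_square_le_1)
qed

lemma G1_nonneg: "G1 \<ge> 0" unfolding G1_def using tR by simp

lemma main_bound: "\<bar>2 * real t * (Aq kk)\<^sup>2 + 2 * real t * (B1 kk + B2 kk)\<^sup>2 - 1\<bar> \<le> err N"
proof -
  define s2 where "s2 = (sin (real kk * th1))\<^sup>2"
  have s2: "s2 \<ge> 1 - 4 / N" "s2 \<le> 1" "s2 \<ge> 0" using s2_bounds by (auto simp: s2_def)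
  have B1s: "2 * real t * (B1 kk)\<^sup>2 = G1 * s2" unfolding s2_def by (rule B1_sq)
  have Np: "N > 0" using tR by simp
  have "(Aq kk)\<^sup>2 \<le> (1 / N)\<^sup>2"
  proof -
    have "\<bar>Aq kk\<bar> \<le> \<bar>1 / N\<bar>" using Aq_bound Np by simp
    thus ?thesis by (simp only: abs_le_square_iff)
  qed
  hence a0: "2 * real t * (Aq kk)\<^sup>2 \<le> (N + 1) / N\<^sup>2"
  proof -
    assume h: "(Aq kk)\<^sup>2 \<le> (1 / N)\<^sup>2"
    have "2 * real t * (Aq kk)\<^sup>2 \<le> (N + 1) * (1 / N)\<^sup>2"
      using h tR by (intro mult_mono) auto
    thus ?thesis by (simp add: power_divide)
  qed
  have a00: "2 * real t * (Aq kk)\<^sup>2 \<ge> 0" using tR by simp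
  have bb: "(B2 kk)\<^sup>2 \<le> (b2 N)\<^sup>2"
  proof -
    have "\<bar>B2 kk\<bar> \<le> \<bar>b2 N\<bar>" using B2_bound tR by (simp add: b2_def)
    thus ?thesis by (simp only: abs_le_square_iff)
  qed
  have c4: "2 * real t * (B2 kk)\<^sup>2 \<le> (N + 1) * (b2 N)\<^sup>2" using bb tR by (intro mult_mono) auto
  have c40: "2 * real t * (B2 kk)\<^sup>2 \<ge> 0" using tR by simp
  have G: "Lo N \<le> G1" "G1 \<le> Up N" "G1 \<ge> 0" using G1_lower G1_upper G1_nonneg by auto
  have c1a: "G1 * s2 - 1 \<le> \<bar>Up N - 1\<bar>"
  proof -
    have "G1 * s2 \<le> G1 * 1" using G s2 by (intro mult_left_mono) auto
    thus ?thesis using G by linarith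
  qed
  have c1b: "1 - G1 * s2 \<le> \<bar>Lo N - 1\<bar> + 4 * Up N / N"
  proof -
    have "G1 * (1 - 4 / N) \<le> G1 * s2" using G s2 by (intro mult_left_mono) auto
    moreover have "G1 * (4 / N) \<le> Up N * (4 / N)" using G Np by (intro mult_right_mono) auto
    ultimately show ?thesis using G by (simp add: algebra_simps)
  qed
  have sN: "sqrt N > 0" using Np by simp
  have c2: "\<bar>4 * real t * (B1 kk * B2 kk)\<bar> \<le> Up N / sqrt N + (N + 1) * sqrt N * (b2 N)\<^sup>2"
  proof -
    have "\<bar>4 * real t * (B1 kk * B2 kk)\<bar> = 2 * real t * (2 * \<bar>B1 kk\<bar> * \<bar>B2 kk\<bar>)"
      using tR by (simp add: abs_mult)
    also have "\<dots> \<le> 2 * real t * ((B1 kk)\<^sup>2 / sqrt N + sqrt N * (B2 kk)\<^sup>2)"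
      using amgm[OF sN] tR by (intro mult_left_mono) auto
    also have "\<dots> = (2 * real t * (B1 kk)\<^sup>2) / sqrt N + sqrt N * (2 * real t * (B2 kk)\<^sup>2)"
      by (simp add: algebra_simps)
    also have "\<dots> \<le> Up N / sqrt N + sqrt N * ((N + 1) * (b2 N)\<^sup>2)"
    proof (rule add_mono)
      have "G1 * s2 \<le> Up N" using G s2 mult_left_mono[of s2 1 G1] by auto
      thus "2 * real t * (B1 kk)\<^sup>2 / sqrt N \<le> Up N / sqrt N" unfolding B1s using sN by (simp add: divide_right_mono)
      show "sqrt N * (2 * real t * (B2 kk)\<^sup>2) \<le> sqrt N * ((N + 1) * (b2 N)\<^sup>2)"
        using c4 sN by (intro mult_left_mono) auto
    qed
    finally show ?thesis by (simp add: algebra_simps)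
  qed
  have expand: "2 * real t * (Aq kk)\<^sup>2 + 2 * real t * (B1 kk + B2 kk)\<^sup>2 - 1
     = 2 * real t * (Aq kk)\<^sup>2 + (G1 * s2 - 1) + 4 * real t * (B1 kk * B2 kk) + 2 * real t * (B2 kk)\<^sup>2"
    unfolding B1s[symmetric] by (simp add: power2_eq_square algebra_simps)
  have nn: "0 \<le> \<bar>Up N - 1\<bar>" "0 \<le> \<bar>Lo N - 1\<bar>" "0 \<le> 4 * Up N / N" "0 \<le> (N + 1) / N\<^sup>2"
    "0 \<le> (N + 1) * (b2 N)\<^sup>2" "0 \<le> Up N / sqrt N + (N + 1) * sqrt N * (b2 N)\<^sup>2"
    using G Np sN by auto
  show ?thesis unfolding expand err_def using a0 a00 c1a c1b c2 c4 c40 nn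
    by (simp only: abs_le_iff) linarith
qed

end


context nt
begin

lemma sin1_ge: "sin th1 \<ge> sqrt (real t) / N"
proof -
  have a: "dl / N \<le> 1"
  proof -
    have "dl / N \<le> 2 / N" using dl_bounds tR by (simp add: divide_right_mono)
    also have "2 / N \<le> 1" using tR by simp
    finally show ?thesis .
  qed
  have b: "real t / N / N \<le> dl / N" by (rule divide_right_mono) (use dl_bounds tR in auto)
  have "real t / N\<^sup>2 \<le> (dl / N) * (2 - dl / N)"
  proof -
    have "real t / N\<^sup>2 = real t / N / N" by (simp add: power2_eq_square)
    also have "\<dots> \<le> dl / N" by (rule b)
    finally have "real t / N\<^sup>2 \<le> dl / N" .
    also have "\<dots> = (dl / N) * 1" by simp
    also have "\<dots> \<le> (dl / N) * (2 - dl / N)" by (rule mult_left_mono) (use a dl_bounds tR in auto)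
    finally show ?thesis .
  qed
  hence "sqrt (real t / N\<^sup>2) \<le> sqrt ((sin th1)\<^sup>2)" unfolding sin1_sq by (rule real_sqrt_le_mono)
  thus ?thesis using th1_facts tR by (simp add: real_sqrt_divide)
qed

lemma sin1_le: "sin th1 \<le> sqrt (8 * real t) / N"
proof -
  have "(dl / N) * (2 - dl / N) \<le> (dl / N) * 2" by (rule mult_left_mono) (use dl_bounds tR in auto)
  hence "(sin th1)\<^sup>2 \<le> 2 * (dl / N)" unfolding sin1_sq by simp
  also have "\<dots> \<le> 2 * (4 * real t / N / N)"
  proof -
    have "dl / N \<le> 4 * real t / N / N" by (rule divide_right_mono) (use dl_bounds tR in auto)
    thus ?thesis by simp
  qed
  also have "\<dots> = 8 * real t / N\<^sup>2" by (simp add: power2_eq_square)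
  finally have "sqrt ((sin th1)\<^sup>2) \<le> sqrt (8 * real t / N\<^sup>2)" by (rule real_sqrt_le_mono)
  thus ?thesis using th1_facts tR by (simp add: real_sqrt_divide)
qed

lemma kk_upper: "real kk \<le> pi * N / (2 * sqrt (real t))"
proof -
  have tp: "sqrt (real t) > 0" using tR by simp
  have th: "th1 \<ge> sqrt (real t) / N" using sin1_ge sin_x_le_x[of th1] th1_facts by linarith
  have "real kk \<le> pi / (2 * th1)" using kk_th th1_facts by (simp add: field_simps)
  also have "\<dots> \<le> pi / (2 * (sqrt (real t) / N))"
    using th tp tR th1_facts by (intro divide_left_mono mult_left_mono) auto
  finally show ?thesis using tR by (simp add: field_simps)
qed

lemma kk_lower: "real kk \<ge> pi / (2 * (2 * (sqrt (8 * real t) / N))) - 1"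
proof -
  have tp: "sqrt (8 * real t) > 0" using tR by simp
  have "th1 * (1/2) \<le> th1 * cos th1" using th1_facts lam1_bounds by (intro mult_left_mono) auto
  also have "\<dots> \<le> sin th1" using th1_facts by (intro x_cos_le_sin) auto
  finally have th: "th1 \<le> 2 * (sqrt (8 * real t) / N)" using sin1_le by linarith
  have "pi / (2 * (2 * (sqrt (8 * real t) / N))) \<le> pi / (2 * th1)"
    using th tp tR th1_facts by (intro divide_left_mono mult_left_mono) auto
  also have "pi / (2 * th1) < real kk + 1" using kk_th th1_facts by (simp add: field_simps)
  finally show ?thesis by simp
qed

end


lemma err_lim: "(\<lambda>n. err (real n)) \<longlonglongrightarrow> 0"
  unfolding err_def Up_def Lo_def b2_def by real_asymp

lemma t_of_bounds:
  assumes "1 \<le> t_of c \<alpha> n"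
  shows "real (t_of c \<alpha> n) \<le> c * real n powr \<alpha>" "real (t_of c \<alpha> n) \<ge> c * real n powr \<alpha> / 2"
proof -
  let ?x = "c * real n powr \<alpha>"
  have "1 \<le> nat \<lfloor>?x\<rfloor>" using assms by (simp add: t_of_def)
  hence f: "\<lfloor>?x\<rfloor> \<ge> 1" by arith
  have e: "real (t_of c \<alpha> n) = of_int \<lfloor>?x\<rfloor>" using f by (simp add: t_of_def)
  show "real (t_of c \<alpha> n) \<le> ?x" unfolding e by simp
  have "of_int \<lfloor>?x\<rfloor> > ?x - 1" by linarith
  moreover have "(1::real) \<le> of_int \<lfloor>?x\<rfloor>" using f by simp
  ultimately show "real (t_of c \<alpha> n) \<ge> ?x / 2" unfolding e by linarith
qed

lemma powr_split:
  assumes "n \<ge> 1" "0 \<le> \<alpha>"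
  shows "real n powr ((2 - \<alpha>) / 2) * sqrt (real n powr \<alpha>) = real n"
proof -
  have np: "real n > 0" using assms by simp
  have "sqrt (real n powr \<alpha>) = (real n powr \<alpha>) powr (1/2)" by (simp add: powr_half_sqrt)
  also have "\<dots> = real n powr (\<alpha> / 2)" by (simp add: powr_powr)
  finally have s: "sqrt (real n powr \<alpha>) = real n powr (\<alpha> / 2)" .
  have h: "(2 - \<alpha>) / 2 + \<alpha> / 2 = (1::real)" by (simp add: field_simps)
  have "real n powr ((2 - \<alpha>) / 2) * real n powr (\<alpha> / 2) = real n powr ((2 - \<alpha>) / 2 + \<alpha> / 2)"
    by (simp add: powr_add)
  also have "\<dots> = real n" unfolding h using np by simp
  finally show ?thesis unfolding s .
qed

lemma P_ge_sqrt:
  assumes "n \<ge> 1" "\<alpha> \<le> 1"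
  shows "real n powr ((2 - \<alpha>) / 2) \<ge> sqrt (real n)"
proof -
  have "real n powr (1/2) \<le> real n powr ((2 - \<alpha>) / 2)" using assms by (intro powr_mono) auto
  thus ?thesis by (simp add: powr_half_sqrt)
qed

theorem theorem1p1:
  fixes c \<alpha> :: real
  assumes "c > 0" and "0 \<le> \<alpha>" and "\<alpha> \<le> 1"
    and "eventually (\<lambda>n. 1 \<le> t_of c \<alpha> n \<and> 2 * t_of c \<alpha> n \<le> n + 1) sequentially"
  shows "(\<lambda>n. real (k_f n (t_of c \<alpha> n))) \<in> \<Theta>(\<lambda>n. real n powr ((2 - \<alpha>) / 2)) \<and>
      (\<forall>\<epsilon>>0. eventually (\<lambda>n. \<forall>\<sigma>. sign_assignment n \<sigma> \<and>
              is_matching (t_of c \<alpha> n) (marked_edges n \<sigma>) \<longrightarrow>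
              \<bar>success_prob n \<sigma> (k_f n (t_of c \<alpha> n)) - 1\<bar> < \<epsilon>) sequentially)"
proof -
  let ?T = "t_of c \<alpha>"
  have ev: "eventually (\<lambda>n. n \<ge> 10 \<and> 1 \<le> ?T n \<and> 2 * ?T n \<le> n + 1) sequentially"
    using assms(4) eventually_ge_at_top[of "10::nat"] by eventually_elim auto
  have NT: "nt n (?T n)" if "n \<ge> 10 \<and> 1 \<le> ?T n \<and> 2 * ?T n \<le> n + 1" for n
    using that by unfold_locales auto
  let ?P = "\<lambda>n. real n powr ((2 - \<alpha>) / 2)"
  let ?k = "\<lambda>n. real (k_f n (?T n))"
  have bigO: "?k \<in> O(?P)"
  proof (rule bigoI[where c = "pi / (2 * sqrt (c / 2))"])
    show "\<forall>\<^sub>F n in sequentially. norm (?k n) \<le> pi / (2 * sqrt (c / 2)) * norm (?P n)"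
      using ev
    proof eventually_elim
      case (elim n)
      interpret nt n "?T n" using NT[OF elim] .
      have tb: "real (?T n) \<ge> c * real n powr \<alpha> / 2" using t_of_bounds elim by auto
      have sa: "sqrt (real (?T n)) \<ge> sqrt (c / 2) * sqrt (real n powr \<alpha>)"
      proof -
        have "c / 2 * real n powr \<alpha> \<le> real (?T n)" using tb by simp
        hence "sqrt (c / 2 * real n powr \<alpha>) \<le> sqrt (real (?T n))" by (rule real_sqrt_le_mono)
        thus ?thesis by (simp only: real_sqrt_mult)
      qed
      have sp: "sqrt (c / 2) * sqrt (real n powr \<alpha>) > 0" using assms elim by simp
      have "?k n = real kk" by (simp add: kk_def)
      also have "\<dots> \<le> pi * N / (2 * sqrt (real (?T n)))" by (rule kk_upper)
      also have "\<dots> \<le> pi * N / (2 * (sqrt (c / 2) * sqrt (real n powr \<alpha>)))"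
        using sa sp tR by (intro divide_left_mono mult_left_mono) auto
      also have "\<dots> = pi / (2 * sqrt (c / 2)) * ?P n"
        using powr_split[of n \<alpha>] elim assms sp by (simp add: field_simps)
      finally show ?case by simp
    qed
  qed
  have bigOm: "?P \<in> O(?k)"
  proof -
    define K where "K = 8 * sqrt (8 * c) / pi"
    have Kp: "K > 0" using assms by (simp add: K_def)
    have evs: "eventually (\<lambda>n::nat. sqrt (real n) \<ge> K) sequentially"
    proof -
      have "eventually (\<lambda>n::nat. n \<ge> nat \<lceil>K\<^sup>2\<rceil>) sequentially" by (rule eventually_ge_at_top)
      thus ?thesis
      proof eventually_elim
        case (elim n)
        hence "K\<^sup>2 \<le> real n" by linarith
        hence "sqrt (K\<^sup>2) \<le> sqrt (real n)" by (rule real_sqrt_le_mono)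
        thus ?case using Kp by simp
      qed
    qed
    show ?thesis
    proof (rule bigoI[where c = K])
      show "\<forall>\<^sub>F n in sequentially. norm (?P n) \<le> K * norm (?k n)"
        using ev evs
      proof eventually_elim
        case (elim n)
        interpret nt n "?T n" using NT[OF elim(1)] .
        have tb: "real (?T n) \<le> c * real n powr \<alpha>" using t_of_bounds elim by auto
        have sa: "sqrt (8 * real (?T n)) \<le> sqrt (8 * c) * sqrt (real n powr \<alpha>)"
        proof -
          have "8 * real (?T n) \<le> 8 * c * real n powr \<alpha>" using tb by simp
          hence "sqrt (8 * real (?T n)) \<le> sqrt (8 * c * real n powr \<alpha>)" by (rule real_sqrt_le_mono)
          thus ?thesis by (simp only: real_sqrt_mult)
        qed
        have tp: "sqrt (8 * real (?T n)) > 0" using tR by simp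
        have Pp: "?P n \<ge> K" using P_ge_sqrt[of n \<alpha>] elim assms by linarith
        have split: "?P n * sqrt (real n powr \<alpha>) = N" using powr_split[of n \<alpha>] elim assms by simp
        have "pi * ?P n / (4 * sqrt (8 * c)) - 1 \<le> pi / (2 * (2 * (sqrt (8 * real (?T n)) / N))) - 1"
        proof -
          have "pi / (2 * (2 * (sqrt (8 * c) * sqrt (real n powr \<alpha>) / N))) \<le> pi / (2 * (2 * (sqrt (8 * real (?T n)) / N)))"
          proof -
            have sN: "sqrt (real n powr \<alpha>) > 0" using tR by simp
            show ?thesis using sa tp tR sN assms(1) by (intro divide_left_mono mult_left_mono divide_right_mono) auto
          qed
          moreover have "pi / (2 * (2 * (sqrt (8 * c) * sqrt (real n powr \<alpha>) / N))) = pi * ?P n / (4 * sqrt (8 * c))"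
            using split[symmetric] tR assms by (simp add: field_simps)
          ultimately show ?thesis by simp
        qed
        also have "\<dots> \<le> ?k n" using kk_lower by (simp add: kk_def)
        finally have k1: "pi * ?P n / (4 * sqrt (8 * c)) - 1 \<le> ?k n" .
        have "pi * ?P n / (8 * sqrt (8 * c)) \<ge> 1"
          using Pp assms unfolding K_def by (simp add: field_simps)
        hence "pi * ?P n / (8 * sqrt (8 * c)) \<le> ?k n" using k1 by (simp add: field_simps)
        hence "?P n \<le> K * ?k n" unfolding K_def using assms by (simp add: field_simps)
        moreover have "?P n \<ge> 0" by simp
        ultimately show ?case by simp
      qed
    qed
  qed
  have theta: "?k \<in> \<Theta>(?P)"
    using bigO bigOm by (intro bigthetaI) (simp_all add: bigomega_iff_bigo)
  have succ: "\<forall>\<epsilon>>0. eventually (\<lambda>n. \<forall>\<sigma>. sign_assignment n \<sigma> \<and>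
              is_matching (?T n) (marked_edges n \<sigma>) \<longrightarrow>
              \<bar>success_prob n \<sigma> (k_f n (?T n)) - 1\<bar> < \<epsilon>) sequentially"
  proof (intro allI impI)
    fix \<epsilon> :: real assume ep: "\<epsilon> > 0"
    have everr: "eventually (\<lambda>n. err (real n) < \<epsilon>) sequentially"
      using order_tendstoD(2)[OF err_lim ep] .
    show "eventually (\<lambda>n. \<forall>\<sigma>. sign_assignment n \<sigma> \<and>
              is_matching (?T n) (marked_edges n \<sigma>) \<longrightarrow>
              \<bar>success_prob n \<sigma> (k_f n (?T n)) - 1\<bar> < \<epsilon>) sequentially"
      using ev everr
    proof eventually_elim
      case (elim n)
      show ?case
      proof (intro allI impI)
        fix \<sigma> assume s: "sign_assignment n \<sigma> \<and> is_matching (?T n) (marked_edges n \<sigma>)"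
        interpret nt n "?T n" using NT[OF elim(1)] .
        interpret mset2 n \<sigma> "?T n" using s elim(1) by unfold_locales auto
        have "success_prob n \<sigma> (k_f n (?T n)) = 2 * real (?T n) * (Aq kk)\<^sup>2 + 2 * real (?T n) * (B1 kk + B2 kk)\<^sup>2"
          unfolding success_formula succ_decomp kk_def ..
        thus "\<bar>success_prob n \<sigma> (k_f n (?T n)) - 1\<bar> < \<epsilon>" using main_bound elim(2) by simp
      qed
    qed
  qed
  show ?thesis using theta succ by blast
qed


end
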